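(* Let $\mathbb{F}$ be an algebraically closed field, $d\ge3$, and let $s\in\mathbb{F}$ be nonzero; assume $\mathrm{Char}(\mathbb{F})$ is $0$ or greater than $d$, and $s^2\neq1$. Let $A,A^*\in\mathrm{Mat}_{d+1}(\mathbb{F})$ (indices $0,\dots,d$) have all diagonal entries $0$ and, for $1\le i\le d$, $A_{i,i-1}=1$, $A_{i-1,i}=i(d-i+1)$, $A^*_{i,i-1}=s$, $A^*_{i-1,i}=s^{-1}i(d-i+1)$, all other entries $0$. Then $A,A^*$ is a Leonard pair in $\mathrm{Mat}_{d+1}(\mathbb{F})$ with fundamental parameter $\beta=2$, and it has a parameter array with $\theta_i=\theta^*_i=d-2i$ $(0\le i\le d)$, $\varphi_i=i(d-i+1)(s+s^{-1}-2)$, $\phi_i=i(d-i+1)(s+s^{-1}+2)$ $(1\le i\le d)$.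
   Context: A Leonard pair in $\mathrm{Mat}_{d+1}(\mathbb{F})$ is a pair of matrices $A,A^*$ such that there is a basis of $\mathbb{F}^{d+1}$ in which $A$ is irreducible tridiagonal (tridiagonal with all sub/superdiagonal entries nonzero) and $A^*$ diagonal, and a basis in which $A^*$ is irreducible tridiagonal and $A$ diagonal. A Leonard system is $(A,\{E_i\}_{i=0}^d,A^*,\{E^*_i\}_{i=0}^d)$ where $A,A^*$ each have $d+1$ distinct eigenvalues, $\{E_i\},\{E^*_i\}$ are orderings of their primitive idempotents, and $E_iA^*E_j,E^*_iAE^*_j$ are $0$ for $|i-j|>1$ and nonzero for $|i-j|=1$. Eigenvalue sequences: $AE_i=\theta_iE_i$, $A^*E^*_i=\theta^*_iE^*_i$. First split sequence: for nonzero $v\in E^*_0V$, $u_i=(A-\theta_{i-1}I)\cdots(A-\theta_0I)v$ form a basis in which $A^*$ is upper bidiagonal with diagonal $\theta^*_0,\dots,\theta^*_d$ and superdiagonal $\varphi_1,\dots,\varphi_d$. Second split sequence $\{\phi_i\}$: first split sequence of $(A,\{E_{d-i}\},A^*,\{E^*_i\})$. A parameter array of a Leonard pair is $(\{\theta_i\},\{\theta^*_i\},\{\varphi_i\},\{\phi_i\})$ for an associated Leonard system. Fundamental parameter: one less than the common value of $(\theta_{i-2}-\theta_{i+1})/(\theta_{i-1}-\theta_i)$, $2\le i\le d-1$. *)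

theory Defs
  imports "Jordan_Normal_Form.Matrix" "HOL-Computational_Algebra.Polynomial"
begin

text \<open>A basis of F^(d+1) is given by the columns of an invertible matrix P;
  the matrix representing A in that basis is the M with A * P = P * M.\<close>

definition irred_tridiag :: "nat \<Rightarrow> 'a::field mat \<Rightarrow> bool" where
  "irred_tridiag n M \<longleftrightarrow> M \<in> carrier_mat n n \<and>
     (\<forall>i<n. \<forall>j<n. (i + 1 < j \<or> j + 1 < i) \<longrightarrow> M $$ (i, j) = 0) \<and>
     (\<forall>i. i + 1 < n \<longrightarrow> M $$ (i, i + 1) \<noteq> 0 \<and> M $$ (i + 1, i) \<noteq> 0)"

definition leonard_pair :: "nat \<Rightarrow> 'a::field mat \<Rightarrow> 'a mat \<Rightarrow> bool" where
  "leonard_pair d A As \<longleftrightarrow> A \<in> carrier_mat (d+1) (d+1) \<and> As \<in> carrier_mat (d+1) (d+1) \<and>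
     (\<exists>P M N. P \<in> carrier_mat (d+1) (d+1) \<and> invertible_mat P \<and>
        A * P = P * M \<and> As * P = P * N \<and> irred_tridiag (d+1) M \<and>
        N \<in> carrier_mat (d+1) (d+1) \<and> diagonal_mat N) \<and>
     (\<exists>Q M N. Q \<in> carrier_mat (d+1) (d+1) \<and> invertible_mat Q \<and>
        As * Q = Q * M \<and> A * Q = Q * N \<and> irred_tridiag (d+1) M \<and>
        N \<in> carrier_mat (d+1) (d+1) \<and> diagonal_mat N)"

definition is_eigenvalue :: "nat \<Rightarrow> 'a::field mat \<Rightarrow> 'a \<Rightarrow> bool" where
  "is_eigenvalue n A t \<longleftrightarrow> (\<exists>v \<in> carrier_vec n. v \<noteq> 0\<^sub>v n \<and> A *\<^sub>v v = t \<cdot>\<^sub>v v)"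

definition prim_idem :: "nat \<Rightarrow> 'a::field mat \<Rightarrow> (nat \<Rightarrow> 'a) \<Rightarrow> nat \<Rightarrow> 'a mat" where
  "prim_idem d A th i =
     foldr (\<lambda>j M. ((1 / (th i - th j)) \<cdot>\<^sub>m (A - th j \<cdot>\<^sub>m 1\<^sub>m (d+1))) * M)
       (filter (\<lambda>j. j \<noteq> i) [0..<d+1]) (1\<^sub>m (d+1))"

text \<open>Leonard system (A, {E_i}, A*, {E*_i}); the eigenvalue sequences th, ths (A E_i = th_i E_i,
  A* E*_i = ths_i E*_i) are recorded as extra arguments, they are determined by the E_i.\<close>
definition leonard_system :: "nat \<Rightarrow> 'a::field mat \<Rightarrow> (nat \<Rightarrow> 'a) \<Rightarrow> (nat \<Rightarrow> 'a mat)
     \<Rightarrow> 'a mat \<Rightarrow> (nat \<Rightarrow> 'a) \<Rightarrow> (nat \<Rightarrow> 'a mat) \<Rightarrow> bool" where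
  "leonard_system d A th E As ths Es \<longleftrightarrow>
     A \<in> carrier_mat (d+1) (d+1) \<and> As \<in> carrier_mat (d+1) (d+1) \<and>
     (\<forall>i\<le>d. is_eigenvalue (d+1) A (th i)) \<and> (\<forall>i\<le>d. \<forall>j\<le>d. i \<noteq> j \<longrightarrow> th i \<noteq> th j) \<and>
     (\<forall>i\<le>d. is_eigenvalue (d+1) As (ths i)) \<and> (\<forall>i\<le>d. \<forall>j\<le>d. i \<noteq> j \<longrightarrow> ths i \<noteq> ths j) \<and>
     (\<forall>i\<le>d. E i = prim_idem d A th i) \<and> (\<forall>i\<le>d. Es i = prim_idem d As ths i) \<and>
     (\<forall>i\<le>d. \<forall>j\<le>d. (i + 1 < j \<or> j + 1 < i) \<longrightarrow>
         E i * As * E j = 0\<^sub>m (d+1) (d+1) \<and> Es i * A * Es j = 0\<^sub>m (d+1) (d+1)) \<and>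
     (\<forall>i\<le>d. \<forall>j\<le>d. (i = j + 1 \<or> j = i + 1) \<longrightarrow>
         E i * As * E j \<noteq> 0\<^sub>m (d+1) (d+1) \<and> Es i * A * Es j \<noteq> 0\<^sub>m (d+1) (d+1))"

text \<open>phi is the first split sequence of the Leonard system with A-eigenvalue sequence th and
  A*-eigenvalue sequence ths: for some nonzero v in E*_0 V, the vectors
  u_i = (A - th_(i-1) I) ... (A - th_0 I) v form a basis in which A* is upper bidiagonal with
  diagonal ths_0..ths_d and superdiagonal phi_1..phi_d.\<close>
definition split_vec :: "nat \<Rightarrow> 'a::field mat \<Rightarrow> (nat \<Rightarrow> 'a) \<Rightarrow> 'a vec \<Rightarrow> nat \<Rightarrow> 'a vec" where
  "split_vec d A th v i = foldl (\<lambda>x j. (A - th j \<cdot>\<^sub>m 1\<^sub>m (d+1)) *\<^sub>v x) v [0..<i]"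

definition first_split :: "nat \<Rightarrow> 'a::field mat \<Rightarrow> (nat \<Rightarrow> 'a) \<Rightarrow> 'a mat \<Rightarrow> (nat \<Rightarrow> 'a)
     \<Rightarrow> (nat \<Rightarrow> 'a) \<Rightarrow> bool" where
  "first_split d A th As ths phi \<longleftrightarrow>
     (\<exists>w \<in> carrier_vec (d+1).
        let v = prim_idem d As ths 0 *\<^sub>v w;
            U = mat_of_cols (d+1) (map (split_vec d A th v) [0..<d+1]);
            B = mat (d+1) (d+1) (\<lambda>(i, j). if i = j then ths i else if j = i + 1 then phi j else 0)
        in v \<noteq> 0\<^sub>v (d+1) \<and> invertible_mat U \<and> As * U = U * B)"

definition second_split :: "nat \<Rightarrow> 'a::field mat \<Rightarrow> (nat \<Rightarrow> 'a) \<Rightarrow> 'a mat \<Rightarrow> (nat \<Rightarrow> 'a)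
     \<Rightarrow> (nat \<Rightarrow> 'a) \<Rightarrow> bool" where
  "second_split d A th As ths phi' \<longleftrightarrow> first_split d A (\<lambda>i. th (d - i)) As ths phi'"

definition parameter_array :: "nat \<Rightarrow> 'a::field mat \<Rightarrow> 'a mat \<Rightarrow> (nat \<Rightarrow> 'a) \<Rightarrow> (nat \<Rightarrow> 'a)
     \<Rightarrow> (nat \<Rightarrow> 'a) \<Rightarrow> (nat \<Rightarrow> 'a) \<Rightarrow> bool" where
  "parameter_array d A As th ths phi phi' \<longleftrightarrow>
     (\<exists>E Es. leonard_system d A th E As ths Es \<and>
        first_split d A th As ths phi \<and> second_split d A th As ths phi')"

definition fundamental_parameter :: "nat \<Rightarrow> 'a::field mat \<Rightarrow> 'a mat \<Rightarrow> 'a \<Rightarrow> bool" where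
  "fundamental_parameter d A As beta \<longleftrightarrow>
     (\<exists>th E ths Es. leonard_system d A th E As ths Es \<and>
        (\<forall>i. 2 \<le> i \<and> i \<le> d - 1 \<longrightarrow>
           (th (i - 2) - th (i + 1)) / (th (i - 1) - th i) = beta + 1))"

end

theory Submission
  imports Defs "Jordan_Normal_Form.Determinant"
begin


definition cc :: "nat \<Rightarrow> nat \<Rightarrow> 'a::field" where "cc d j = (\<Prod>k<j. of_nat (d - k))"
definition vc :: "nat \<Rightarrow> 'a::field poly \<Rightarrow> 'a vec" where
  "vc d f = vec (d+1) (\<lambda>j. coeff f j / cc d j)"
definition opp :: "nat \<Rightarrow> 'a::field \<Rightarrow> 'a \<Rightarrow> 'a \<Rightarrow> 'a poly \<Rightarrow> 'a poly" where
  "opp d \<alpha> \<beta> \<gamma> f = smult \<alpha> (smult (of_nat d) (pCons 0 f) - pCons 0 (pCons 0 (pderiv f)))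
     + smult \<beta> (pderiv f) + smult \<gamma> f"
definition Mab :: "nat \<Rightarrow> 'a::field \<Rightarrow> 'a \<Rightarrow> 'a \<Rightarrow> 'a mat" where
  "Mab d \<alpha> \<beta> \<gamma> = mat (d+1) (d+1) (\<lambda>(i,j). if i = j then \<gamma> else if i = j+1 then \<alpha>
      else if j = i+1 then \<beta> * of_nat (j*(d-j+1)) else 0)"

lemma cc_nz: assumes nz: "\<forall>k. 0 < k \<and> k \<le> d \<longrightarrow> (of_nat k::'a::field) \<noteq> 0"
  and "j \<le> d" shows "(cc d j :: 'a) \<noteq> 0"
proof -
  have "\<forall>k<j. (of_nat (d - k)::'a) \<noteq> 0"
  proof (intro allI impI)
    fix k assume "k < j"
    hence "0 < d - k \<and> d - k \<le> d" using assms(2) by auto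
    thus "(of_nat (d - k)::'a) \<noteq> 0" using nz by blast
  qed
  thus ?thesis unfolding cc_def by (simp add: prod_zero_iff del: of_nat_diff)
qed

lemma nzD: assumes "\<forall>k. 0 < k \<and> k \<le> d \<longrightarrow> (of_nat k::'a::field) \<noteq> 0" "0 < k" "k \<le> d"
  shows "(of_nat k::'a) \<noteq> 0" using assms by blast

lemma cc_Suc: "cc d (Suc j) = cc d j * of_nat (d - j)"
  unfolding cc_def by simp

lemma sum3:
  fixes x :: "nat \<Rightarrow> 'a::field"
  assumes "i \<le> d"
  shows "(\<Sum>j<d+1. (if i = j then g else if i = j+1 then a else if j = i+1 then b j else 0) * x j)
     = g * x i + (if i \<ge> 1 then a * x (i-1) else 0) + (if i < d then b (i+1) * x (i+1) else 0)"
proof -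
  have "(\<Sum>j<d+1. (if i = j then g else if i = j+1 then a else if j = i+1 then b j else 0) * x j)
    = (\<Sum>j<d+1. (if j = i then g * x j else 0)) + (\<Sum>j<d+1. (if j = i - 1 \<and> i \<ge> 1 then a * x j else 0))
      + (\<Sum>j<d+1. (if j = i+1 then b j * x j else 0))"
    unfolding sum.distrib[symmetric] by (rule sum.cong) auto
  also have "\<dots> = g * x i + (if i \<ge> 1 then a * x (i-1) else 0) + (if i < d then b (i+1) * x (i+1) else 0)"
    using assms by (auto simp: sum.delta)
  finally show ?thesis .
qed

lemma L1:
  fixes f :: "'a::field poly"
  assumes nz: "\<forall>k. 0 < k \<and> k \<le> d \<longrightarrow> (of_nat k::'a) \<noteq> 0"
    and deg: "degree f \<le> d"
  shows "Mab d \<alpha> \<beta> \<gamma> *\<^sub>v vc d f = vc d (opp d \<alpha> \<beta> \<gamma> f)"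
proof (rule eq_vecI)
  show "dim_vec (Mab d \<alpha> \<beta> \<gamma> *\<^sub>v vc d f) = dim_vec (vc d (opp d \<alpha> \<beta> \<gamma> f))"
    by (simp add: Mab_def vc_def)
  fix i assume "i < dim_vec (vc d (opp d \<alpha> \<beta> \<gamma> f))"
  hence i: "i \<le> d" by (simp add: vc_def)
  let ?x = "\<lambda>j. coeff f j / cc d j"
  have "(Mab d \<alpha> \<beta> \<gamma> *\<^sub>v vc d f) $ i = (\<Sum>j<d+1. (if i = j then \<gamma> else if i = j+1 then \<alpha>
      else if j = i+1 then \<beta> * of_nat (j*(d-j+1)) else 0) * ?x j)"
    using i by (simp add: Mab_def vc_def scalar_prod_def row_def lessThan_atLeast0)
  also have "\<dots> = \<gamma> * ?x i + (if i \<ge> 1 then \<alpha> * ?x (i-1) else 0) +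
     (if i < d then \<beta> * of_nat ((i+1)*(d-(i+1)+1)) * ?x (i+1) else 0)"
    by (rule sum3[OF i])
  also have "\<dots> = coeff (opp d \<alpha> \<beta> \<gamma> f) i / cc d i"
  proof -
    have ci: "(cc d i::'a) \<noteq> 0" using cc_nz[OF nz i] .
    have c1: "coeff (opp d \<alpha> \<beta> \<gamma> f) i = \<gamma> * coeff f i + (if i \<ge> 1 then \<alpha> * of_nat (d - i + 1) * coeff f (i-1) else 0)
       + \<beta> * of_nat (i+1) * coeff f (i+1)"
      using i by (cases i; cases "i - 1") (auto simp: opp_def coeff_pderiv algebra_simps of_nat_diff)
    have t1: "\<gamma> * ?x i = \<gamma> * coeff f i / cc d i" by simp
    have t2: "(if i \<ge> 1 then \<alpha> * ?x (i-1) else 0) = (if i \<ge> 1 then \<alpha> * of_nat (d - i + 1) * coeff f (i-1) else 0) / cc d i"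
    proof (cases "i \<ge> 1")
      case True
      have e: "(cc d i::'a) = cc d (i-1) * of_nat (d - (i - 1))"
        using cc_Suc[of d "i-1"] True by simp
      have e2: "d - (i - 1) = d - i + 1" using True i by simp
      have "(cc d (i-1)::'a) \<noteq> 0" using cc_nz[OF nz, of "i-1"] i by simp
      moreover have "(of_nat (d - i + 1)::'a) \<noteq> 0" by (rule nzD[OF nz]) (use True i in auto)
      moreover have "\<And>c n a. (c::'a) \<noteq> 0 \<Longrightarrow> n \<noteq> 0 \<Longrightarrow> \<alpha> * (a / c) = \<alpha> * n * a / (c * n)"
        by (simp add: field_simps)
      ultimately show ?thesis using True unfolding e e2 by simp
    qed simp
    have t3: "(if i < d then \<beta> * of_nat ((i+1)*(d-(i+1)+1)) * ?x (i+1) else 0) = \<beta> * of_nat (i+1) * coeff f (i+1) / cc d i"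
    proof (cases "i < d")
      case True
      have e: "(cc d (i+1)::'a) = cc d i * of_nat (d - i)"
        using cc_Suc[of d i] by simp
      have e2: "d-(i+1)+1 = d - i" using True by simp
      have "(of_nat (d - i)::'a) \<noteq> 0" by (rule nzD[OF nz]) (use True i in auto)
      moreover have "\<And>c n a m. (c::'a) \<noteq> 0 \<Longrightarrow> n \<noteq> 0 \<Longrightarrow> \<beta> * (m * n) * (a / (c * n)) = \<beta> * m * a / c"
        by (simp add: field_simps)
      ultimately show ?thesis using True ci unfolding e e2 by (simp only: of_nat_mult if_True)
    next
      case False
      hence "i = d" using i by simp
      moreover have "coeff f (d+1) = 0" using deg by (simp add: coeff_eq_0)
      ultimately show ?thesis by simp
    qed
    show ?thesis unfolding c1 t2 t3 using ci by (simp add: add_divide_distrib)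
  qed
  also have "\<dots> = vc d (opp d \<alpha> \<beta> \<gamma> f) $ i" using i by (simp add: vc_def)
  finally show "(Mab d \<alpha> \<beta> \<gamma> *\<^sub>v vc d f) $ i = vc d (opp d \<alpha> \<beta> \<gamma> f) $ i" .
qed



lemma pow_deriv: "[:1,a:] * pderiv ([:1,a:]^m) = smult (of_nat m * a) ([:1,a:]^m :: 'a::field poly)"
proof (cases m)
  case 0 thus ?thesis by simp
next
  case (Suc n)
  show ?thesis unfolding Suc pderiv_power_Suc
    by (simp add: pderiv_pCons algebra_simps)
qed

lemma prod_deriv:
  fixes a b :: "'a::field"
  shows "[:1,a:] * [:1,b:] * pderiv ([:1,a:]^m * [:1,b:]^n)
    = (smult (of_nat m * a) [:1,b:] + smult (of_nat n * b) [:1,a:]) * ([:1,a:]^m * [:1,b:]^n)"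
proof -
  let ?p = "[:1,a:]" and ?q = "[:1,b:]"
  have "?p * ?q * pderiv (?p^m * ?q^n) = ?p^m * ?p * (?q * pderiv (?q^n)) + ?q^n * ?q * (?p * pderiv (?p^m))"
    by (simp add: pderiv_mult algebra_simps smult_add_left)
  also have "\<dots> = ?p^m * ?p * smult (of_nat n * b) (?q^n) + ?q^n * ?q * smult (of_nat m * a) (?p^m)"
    by (simp only: pow_deriv)
  also have "\<dots> = (smult (of_nat m * a) ?q + smult (of_nat n * b) ?p) * (?p^m * ?q^n)"
    by (simp add: algebra_simps smult_add_left)
  finally show ?thesis .
qed

lemma opp_pq:
  fixes a b :: "'a::field"
  assumes "m + n = d"
  shows "[:1,a:] * [:1,b:] * opp d \<alpha> \<beta> \<gamma> ([:1,a:]^m * [:1,b:]^n)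
    = [: \<beta>*(of_nat m*a + of_nat n*b) + \<gamma>, of_nat d*(\<alpha> + \<beta>*a*b) + \<gamma>*(a+b),
         \<alpha>*(of_nat m*b + of_nat n*a) + \<gamma>*a*b :] * ([:1,a:]^m * [:1,b:]^n)"
proof -
  let ?p = "[:1,a:]" and ?q = "[:1,b:]" and ?f = "[:1,a:]^m * [:1,b:]^n"
  let ?R = "smult (of_nat m * a) ?q + smult (of_nat n * b) ?p"
  have pc: "\<And>X Y. X * pCons 0 Y = pCons 0 (X * Y)" for X Y :: "'a poly"
    by (simp add: mult_pCons_right)
  have pc2: "\<And>X Y. pCons 0 (X * Y) = pCons 0 X * Y" for X Y :: "'a poly"
    by (simp add: mult_pCons_left)
  have "?p * ?q * opp d \<alpha> \<beta> \<gamma> ?f = smult \<alpha> (smult (of_nat d) (pCons 0 (?p * ?q * ?f))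
      - pCons 0 (pCons 0 (?p * ?q * pderiv ?f))) + smult \<beta> (?p * ?q * pderiv ?f) + smult \<gamma> (?p * ?q * ?f)"
    unfolding opp_def by (simp only: pc ring_distribs mult_smult_right)
  also have "\<dots> = smult \<alpha> (smult (of_nat d) (pCons 0 (?p * ?q * ?f))
      - pCons 0 (pCons 0 (?R * ?f))) + smult \<beta> (?R * ?f) + smult \<gamma> (?p * ?q * ?f)"
    unfolding prod_deriv ..
  also have "\<dots> = (smult \<alpha> (smult (of_nat d) (pCons 0 (?p * ?q))
      - pCons 0 (pCons 0 ?R)) + smult \<beta> ?R + smult \<gamma> (?p * ?q)) * ?f"
    by (simp only: mult_pCons_left smult_0_left add_0_left ring_distribs mult_smult_left smult_diff_right mult.assoc)
  also have "smult \<alpha> (smult (of_nat d) (pCons 0 (?p * ?q))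
      - pCons 0 (pCons 0 ?R)) + smult \<beta> ?R + smult \<gamma> (?p * ?q) = [: \<beta>*(of_nat m*a + of_nat n*b) + \<gamma>, of_nat d*(\<alpha> + \<beta>*a*b) + \<gamma>*(a+b),
         \<alpha>*(of_nat m*b + of_nat n*a) + \<gamma>*a*b :]"
    using assms[symmetric] by (simp add: algebra_simps)
  finally show ?thesis .
qed



definition fam :: "nat \<Rightarrow> 'a::field \<Rightarrow> 'a \<Rightarrow> nat \<Rightarrow> 'a poly" where
  "fam d a b i = [:1,a:]^(d-i) * [:1,b:]^i"

lemma fam_coeff0: "coeff (fam d a b i) 0 = 1"
  by (simp add: fam_def coeff_mult_0 coeff_0_power)

lemma fam_deg: "i \<le> d \<Longrightarrow> degree (fam d a b i) \<le> d"
proof -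
  assume "i \<le> d"
  have "degree (fam d a b i) \<le> degree ([:1,a:]^(d-i)) + degree ([:1,b:]^i)"
    unfolding fam_def by (rule degree_mult_le)
  also have "\<dots> \<le> degree [:1,a:] * (d - i) + degree [:1,b:] * i"
    by (intro add_mono degree_power_le)
  also have "\<dots> \<le> 1 * (d - i) + 1 * i" by (intro add_mono mult_right_mono) auto
  finally show ?thesis using \<open>i \<le> d\<close> by simp
qed

lemma op_fam:
  fixes a b :: "'a::field"
  assumes i: "i \<le> d"
    and e0: "\<beta>*(of_nat (d-i)*a + of_nat i*b) + \<gamma> = x0 + x1 + x2"
    and e1: "of_nat d*(\<alpha> + \<beta>*a*b) + \<gamma>*(a+b) = x0*(a+b) + 2*a*x1 + 2*b*x2"
    and e2: "\<alpha>*(of_nat (d-i)*b + of_nat i*a) + \<gamma>*a*b = x0*a*b + x1*a^2 + x2*b^2"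
    and z1: "i = 0 \<Longrightarrow> x1 = 0" and z2: "i = d \<Longrightarrow> x2 = 0"
  shows "opp d \<alpha> \<beta> \<gamma> (fam d a b i) = smult x0 (fam d a b i) + smult x1 (fam d a b (i-1))
           + smult x2 (fam d a b (i+1))"
proof -
  let ?p = "[:1,a:]" and ?q = "[:1,b:]" and ?f = "fam d a b i"
  have pq: "?p * ?q \<noteq> 0" by simp
  have L: "?p * ?q * opp d \<alpha> \<beta> \<gamma> ?f = [: \<beta>*(of_nat (d-i)*a + of_nat i*b) + \<gamma>, of_nat d*(\<alpha> + \<beta>*a*b) + \<gamma>*(a+b),
         \<alpha>*(of_nat (d-i)*b + of_nat i*a) + \<gamma>*a*b :] * ?f"
    unfolding fam_def by (rule opp_pq) (use i in simp)
  also have "\<dots> = (smult x0 (?p * ?q) + smult x1 (?p * ?p) + smult x2 (?q * ?q)) * ?f"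
    unfolding e0 e1 e2 by (simp add: algebra_simps power2_eq_square)
  also have "\<dots> = ?p * ?q * (smult x0 ?f + smult x1 (fam d a b (i-1)) + smult x2 (fam d a b (i+1)))"
  proof -
    have A: "smult x1 (?p * ?p) * ?f = ?p * ?q * smult x1 (fam d a b (i-1))"
    proof (cases "i = 0")
      case False
      have "d - (i - 1) = Suc (d - i)" using False i by simp
      moreover have "i = Suc (i - 1)" using False by simp
      ultimately have F: "fam d a b i = [:1,a:]^(d-i) * ([:1,b:] * [:1,b:]^(i-1))"
          "fam d a b (i-1) = [:1,a:] * [:1,a:]^(d-i) * [:1,b:]^(i-1)"
        unfolding fam_def by (metis power_Suc, simp)
      have G: "\<And>P Q X Y :: 'a poly. smult x1 (P*P) * (X * (Q*Y)) = P*Q*smult x1 (P*X*Y)"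
        by (simp add: ac_simps)
      show ?thesis unfolding F by (rule G)
    qed (simp add: z1)
    have B: "smult x2 (?q * ?q) * ?f = ?p * ?q * smult x2 (fam d a b (i+1))"
    proof (cases "i = d")
      case False
      have "d - i = Suc (d - (i + 1))" using False i by simp
      hence F: "fam d a b i = [:1,a:] * [:1,a:]^(d-(i+1)) * [:1,b:]^i"
          "fam d a b (i+1) = [:1,a:]^(d-(i+1)) * ([:1,b:] * [:1,b:]^i)"
        unfolding fam_def by simp_all
      have G: "\<And>P Q X Y :: 'a poly. smult x2 (Q*Q) * (P * X * Y) = P*Q*smult x2 (X*(Q*Y))"
        by (simp add: ac_simps)
      show ?thesis unfolding F by (rule G)
    qed (simp add: z2)
    have C: "smult x0 (?p * ?q) * ?f = ?p * ?q * smult x0 ?f" by (simp only: mult_smult_left mult_smult_right)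
    show ?thesis unfolding ring_distribs A B C ..
  qed
  finally have "?p * ?q * opp d \<alpha> \<beta> \<gamma> ?f = ?p * ?q * (smult x0 ?f + smult x1 (fam d a b (i-1)) + smult x2 (fam d a b (i+1)))" .
  thus ?thesis using mult_left_cancel[OF pq] by blast
qed



definition Ssub :: "nat \<Rightarrow> 'a::field \<Rightarrow> 'a poly \<Rightarrow> 'a poly" where
  "Ssub m c f = (\<Sum>j\<le>m. smult (coeff f j) (monom 1 j * [:1,c:]^(m-j)))"

lemma Ssub_add: "Ssub m c (f + g) = Ssub m c f + Ssub m c g"
  by (simp add: Ssub_def smult_add_left sum.distrib)

lemma smult_sum_right: "smult a (sum f A) = (\<Sum>x\<in>A. smult a (f x))"
  by (induction A rule: infinite_finite_induct) (auto simp: smult_add_right)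

lemma Ssub_smult: "Ssub m c (smult a f) = smult a (Ssub m c f)"
  by (simp add: Ssub_def smult_sum_right)

lemma Ssub_Suc1: assumes "degree f \<le> m"
  shows "Ssub (Suc m) c f = [:1,c:] * Ssub m c f"
proof -
  have "Ssub (Suc m) c f = (\<Sum>j\<le>m. smult (coeff f j) (monom 1 j * [:1,c:]^(Suc m-j)))"
    unfolding Ssub_def using assms by (simp add: coeff_eq_0)
  also have "\<dots> = (\<Sum>j\<le>m. [:1,c:] * smult (coeff f j) (monom 1 j * [:1,c:]^(m-j)))"
    by (rule sum.cong) (auto simp: Suc_diff_le ac_simps)
  also have "\<dots> = [:1,c:] * Ssub m c f" unfolding Ssub_def by (simp add: sum_distrib_left)
  finally show ?thesis .
qed

lemma Ssub_Suc2: "Ssub (Suc m) c (pCons 0 f) = pCons 0 (Ssub m c f)"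
proof -
  have "Ssub (Suc m) c (pCons 0 f) = (\<Sum>j\<le>m. smult (coeff f j) (monom 1 (Suc j) * [:1,c:]^(m-j)))"
    unfolding Ssub_def sum.atMost_Suc_shift by simp
  also have "\<dots> = (\<Sum>j\<le>m. monom 1 1 * smult (coeff f j) (monom 1 j * [:1,c:]^(m-j)))"
  proof (rule sum.cong)
    fix x assume "x \<in> {..m}"
    have "monom (1::'a) (Suc x) = monom 1 1 * monom 1 x" by (simp add: mult_monom)
    thus "smult (coeff f x) (monom 1 (Suc x) * [:1,c:]^(m-x)) = monom 1 1 * smult (coeff f x) (monom 1 x * [:1,c:]^(m-x))"
      by (simp add: ac_simps)
  qed simp
  also have "\<dots> = monom 1 1 * Ssub m c f" unfolding Ssub_def by (simp add: sum_distrib_left)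
  also have "\<dots> = pCons 0 (Ssub m c f)" by (simp add: monom_Suc mult_pCons_left)
  finally show ?thesis .
qed

lemma Ssub_step: assumes "degree f \<le> m"
  shows "Ssub (Suc m) c ([:1,a:] * f) = [:1,a+c:] * Ssub m c f"
proof -
  have "[:1,a:] * f = f + pCons 0 (smult a f)" by (simp add: mult_pCons_left)
  hence "Ssub (Suc m) c ([:1,a:] * f) = [:1,c:] * Ssub m c f + pCons 0 (smult a (Ssub m c f))"
    using assms by (simp add: Ssub_add Ssub_Suc1 Ssub_Suc2 Ssub_smult)
  also have "\<dots> = [:1,a+c:] * Ssub m c f" by (simp add: mult_pCons_left algebra_simps smult_add_left)
  finally show ?thesis .
qed

lemma Ssub_pow: assumes "Ssub k c f = g" "degree f \<le> k"
  shows "Ssub (k + r) c ([:1,a:]^r * f) = [:1,a+c:]^r * g"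
proof (induction r)
  case 0 thus ?case using assms by simp
next
  case (Suc r)
  have "degree ([:1,a:]^r * f) \<le> k + r"
  proof -
    have "degree ([:1,a:]^r * f) \<le> degree ([:1,a:]^r) + degree f" by (rule degree_mult_le)
    also have "\<dots> \<le> degree [:1,a:] * r + k" by (intro add_mono degree_power_le assms(2))
    also have "\<dots> \<le> 1 * r + k" by (intro add_mono mult_right_mono) auto
    finally show ?thesis by simp
  qed
  hence "Ssub (Suc (k + r)) c ([:1,a:] * ([:1,a:]^r * f)) = [:1,a+c:] * Ssub (k + r) c ([:1,a:]^r * f)"
    by (rule Ssub_step)
  thus ?case using Suc.IH by (simp only: add_Suc_right power_Suc mult.assoc)
qed

lemma Ssub_fam: assumes "i \<le> d"
  shows "Ssub d c (fam d a b i) = fam d (a+c) (b+c) i"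
proof -
  have S0: "Ssub 0 c 1 = 1" by (simp add: Ssub_def)
  have "Ssub (0 + i) c ([:1,b:]^i * 1) = [:1,b+c:]^i * 1" by (rule Ssub_pow[OF S0]) simp
  hence S1: "Ssub i c ([:1,b:]^i) = [:1,b+c:]^i" by simp
  have dg: "degree ([:1,b:]^i) \<le> i"
    using degree_power_le[of "[:1,b:]" i] by (auto split: if_splits)
  have "Ssub (i + (d-i)) c ([:1,a:]^(d-i) * [:1,b:]^i) = [:1,a+c:]^(d-i) * [:1,b+c:]^i"
    by (rule Ssub_pow[OF S1 dg])
  thus ?thesis using assms unfolding fam_def by simp
qed



definition colsM :: "nat \<Rightarrow> (nat \<Rightarrow> 'a::field poly) \<Rightarrow> 'a mat" where
  "colsM d g = mat (d+1) (d+1) (\<lambda>(k,i). coeff (g i) k / cc d k)"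

lemma det_nz_invertible: assumes A: "(A::'a::field mat) \<in> carrier_mat n n" and "det A \<noteq> 0"
  shows "invertible_mat A"
proof -
  have "A \<in> Units (ring_mat TYPE('a) n undefined)" by (rule det_non_zero_imp_unit[OF A assms(2)])
  then obtain B where B: "B \<in> carrier_mat n n" "B * A = 1\<^sub>m n" "A * B = 1\<^sub>m n"
    unfolding Units_def ring_mat_def by auto
  thus ?thesis using A unfolding invertible_mat_def inverts_mat_def square_mat.simps by auto
qed

lemma coeff_lin_pow: "coeff ([:1,e:]^i) i = (e::'a::field)^i"
proof (cases "e = 0")
  case True thus ?thesis by (cases i) (auto simp: pCons_one)
next
  case False
  hence "degree ([:1,e:]^i) = i" by (simp add: degree_power_eq)
  hence "coeff ([:1,e:]^i) i = lead_coeff ([:1,e:]^i)" by simp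
  also have "\<dots> = e^i" using False by (simp add: lead_coeff_power)
  finally show ?thesis .
qed

lemma inv_fam:
  fixes a b :: "'a::field"
  assumes nz: "\<forall>k. 0 < k \<and> k \<le> d \<longrightarrow> (of_nat k::'a) \<noteq> 0"
    and ab: "a \<noteq> b" and w: "\<forall>i\<le>d. w i \<noteq> 0"
  shows "invertible_mat (colsM d (\<lambda>i. smult (w i) (fam d a b i)))"
proof -
  let ?F = "colsM d (\<lambda>i. smult (w i) (fam d a b i))"
  let ?F2 = "colsM d (\<lambda>i. smult (w (d-i)) (fam d a b (d-i)))"
  let ?G = "colsM d (\<lambda>i. smult (w (d-i)) ([:1,a-b:]^i))"
  let ?c = "-b"
  define MS where "MS = mat (d+1) (d+1) (\<lambda>(k,j). coeff (monom 1 j * [:1,?c:]^(d-j)) k * cc d j / cc d k)"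
  define J where "J = mat (d+1) (d+1) (\<lambda>(i,j). if i + j = d then (1::'a) else 0)"
  have cF: "?F \<in> carrier_mat (d+1) (d+1)" "?F2 \<in> carrier_mat (d+1) (d+1)" "?G \<in> carrier_mat (d+1) (d+1)"
    "MS \<in> carrier_mat (d+1) (d+1)" "J \<in> carrier_mat (d+1) (d+1)"
    by (auto simp: colsM_def MS_def J_def)
  have ccnz: "\<And>j. j \<le> d \<Longrightarrow> (cc d j::'a) \<noteq> 0" using cc_nz[OF nz] by blast
  have MSG: "MS * ?F2 = ?G"
  proof (rule eq_matI)
    fix k i assume k: "k < dim_row ?G" and i: "i < dim_col ?G"
    hence k': "k \<le> d" and i': "i \<le> d" by (auto simp: colsM_def)
    let ?g = "smult (w (d-i)) (fam d a b (d-i))"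
    have "(MS * ?F2) $$ (k,i) = (\<Sum>j<d+1. coeff (monom 1 j * [:1,?c:]^(d-j)) k * cc d j / cc d k * (coeff ?g j / cc d j))"
      using k i by (simp add: MS_def colsM_def scalar_prod_def row_def col_def lessThan_atLeast0)
    also have "\<dots> = (\<Sum>j\<le>d. coeff ?g j * coeff (monom 1 j * [:1,?c:]^(d-j)) k) / cc d k"
      unfolding sum_divide_distrib
      by (rule sum.cong) (auto simp: ccnz field_simps lessThan_Suc_atMost[symmetric])
    also have "\<dots> = coeff (Ssub d ?c ?g) k / cc d k"
      by (simp add: Ssub_def coeff_sum)
    also have "Ssub d ?c ?g = smult (w (d-i)) (fam d (a-b) 0 (d-i))"
      by (simp add: Ssub_smult Ssub_fam)
    also have "fam d (a-b) 0 (d-i) = [:1,a-b:]^i"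
      using i' by (simp add: fam_def pCons_one)
    finally show "(MS * ?F2) $$ (k,i) = ?G $$ (k,i)" using k i by (simp add: colsM_def)
  qed (auto simp: colsM_def MS_def)
  have Gut: "upper_triangular ?G"
    unfolding upper_triangular_def
  proof (intro allI impI)
    fix k i assume k: "k < dim_row ?G" and ik: "i < k"
    have "degree ([:1,a-b:]^i) \<le> i"
      using degree_power_le[of "[:1,a-b:]" i] by (auto split: if_splits)
    hence "coeff ([:1,a-b:]^i) k = 0" using ik by (simp add: coeff_eq_0)
    thus "?G $$ (k,i) = 0" using k ik by (simp add: colsM_def)
  qed
  have "det ?G = prod_list (diag_mat ?G)" by (rule det_upper_triangular[OF Gut cF(3)])
  also have "\<dots> \<noteq> 0"
  proof -
    have "\<forall>x \<in> set (diag_mat ?G). x \<noteq> 0"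
    proof
      fix x assume "x \<in> set (diag_mat ?G)"
      hence "x \<in> (\<lambda>i. ?G $$ (i,i)) ` {0..<dim_row ?G}" unfolding diag_mat_def by simp
      then obtain i where i0: "i \<in> {0..<dim_row ?G}" "x = ?G $$ (i,i)" by (rule imageE)
      have dG: "dim_row ?G = d+1" by (simp add: colsM_def)
      have i: "i \<le> d" "x = ?G $$ (i,i)" using i0 unfolding dG by auto
      hence "x = w (d-i) * (a-b)^i / cc d i" by (simp add: colsM_def coeff_lin_pow)
      thus "x \<noteq> 0" using i w ab ccnz by auto
    qed
    thus ?thesis by (auto simp: prod_list_zero_iff)
  qed
  finally have dG: "det ?G \<noteq> 0" .
  hence "det MS * det ?F2 \<noteq> 0" using det_mult[OF cF(4) cF(2)] MSG by simp
  hence dF2: "det ?F2 \<noteq> 0" by simp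
  have F2: "?F2 = ?F * J"
  proof (rule eq_matI)
    fix k i assume k: "k < dim_row (?F * J)" and i: "i < dim_col (?F * J)"
    hence k': "k \<le> d" and i': "i \<le> d" by (auto simp: colsM_def J_def)
    have "(?F * J) $$ (k,i) = (\<Sum>j<d+1. (coeff (smult (w j) (fam d a b j)) k / cc d k) * (if j + i = d then 1 else 0))"
      using k i by (simp add: J_def colsM_def scalar_prod_def row_def col_def lessThan_atLeast0)
    also have "\<dots> = (\<Sum>j<d+1. if j = d - i then coeff (smult (w j) (fam d a b j)) k / cc d k else 0)"
      by (rule sum.cong) (use i' in auto)
    also have "\<dots> = coeff (smult (w (d-i)) (fam d a b (d-i))) k / cc d k" by simp
    finally show "?F2 $$ (k,i) = (?F * J) $$ (k,i)" using k i by (simp add: colsM_def J_def)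
  qed (auto simp: colsM_def J_def)
  have "det ?F * det J \<noteq> 0" using dF2 unfolding F2 det_mult[OF cF(1) cF(5)] .
  hence "det ?F \<noteq> 0" by simp
  thus ?thesis by (rule det_nz_invertible[OF cF(1)])
qed



definition Mt :: "nat \<Rightarrow> (nat \<Rightarrow> 'a::field) \<Rightarrow> (nat \<Rightarrow> 'a) \<Rightarrow> (nat \<Rightarrow> 'a) \<Rightarrow> 'a mat" where
  "Mt d x0 x1 x2 = mat (d+1) (d+1) (\<lambda>(k,j). if k = j then x0 j else if k + 1 = j then x1 j
       else if k = j + 1 then x2 j else 0)"

lemma vc_carrier[simp]: "vc d f \<in> carrier_vec (d+1)" by (simp add: vc_def)
lemma vc_dim[simp]: "dim_vec (vc d f) = d+1" by (simp add: vc_def)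
lemma vc_index: "r \<le> d \<Longrightarrow> vc d f $ r = coeff f r / cc d r" by (simp add: vc_def)
lemma vc_smult: "vc d (smult c f) = c \<cdot>\<^sub>v vc d f"
  by (rule eq_vecI) (auto simp: vc_def)
lemma vc_add: "vc d (f + g) = vc d f + vc d g"
  by (rule eq_vecI) (auto simp: vc_def add_divide_distrib)
lemma vc_0: "vc d f $ 0 = coeff f 0" by (simp add: vc_def cc_def)
lemma vc_nz: "coeff f 0 \<noteq> 0 \<Longrightarrow> vc d f \<noteq> 0\<^sub>v (d+1)"
  using vc_0[of d f] by (metis index_zero_vec(1) zero_less_Suc Suc_eq_plus1)

lemma colsM_carrier[simp]: "colsM d g \<in> carrier_mat (d+1) (d+1)" by (simp add: colsM_def)
lemma col_colsM: "j \<le> d \<Longrightarrow> col (colsM d g) j = vc d (g j)"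
  by (rule eq_vecI) (auto simp: colsM_def vc_def)

lemma sum3b:
  fixes z :: "nat \<Rightarrow> 'a::field"
  assumes "j \<le> d"
  shows "(\<Sum>k<d+1. z k * (if k = j then A else if k + 1 = j then B else if k = j+1 then C else 0))
     = z j * A + (if j \<ge> 1 then z (j-1) * B else 0) + (if j < d then z (j+1) * C else 0)"
proof -
  have "(\<Sum>k<d+1. z k * (if k = j then A else if k + 1 = j then B else if k = j+1 then C else 0))
    = (\<Sum>k<d+1. (if k = j then z k * A else 0)) + (\<Sum>k<d+1. (if k = j - 1 \<and> j \<ge> 1 then z k * B else 0))
      + (\<Sum>k<d+1. (if k = j+1 then z k * C else 0))"
    unfolding sum.distrib[symmetric] by (rule sum.cong) auto
  also have "\<dots> = z j * A + (if j \<ge> 1 then z (j-1) * B else 0) + (if j < d then z (j+1) * C else 0)"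
    using assms by (auto simp: sum.delta)
  finally show ?thesis .
qed

lemma L6:
  fixes Y :: "'a::field mat"
  assumes Y: "Y \<in> carrier_mat (d+1) (d+1)"
    and rel: "\<And>j. j \<le> d \<Longrightarrow> Y *\<^sub>v vc d (g j) = vc d (smult (x0 j) (g j) + smult (x1 j) (g (j-1)) + smult (x2 j) (g (j+1)))"
    and z1: "x1 0 = 0" and z2: "x2 d = 0"
  shows "Y * colsM d g = colsM d g * Mt d x0 x1 x2"
proof (rule eq_matI)
  fix r j assume r: "r < dim_row (colsM d g * Mt d x0 x1 x2)" and j: "j < dim_col (colsM d g * Mt d x0 x1 x2)"
  hence r': "r \<le> d" and j': "j \<le> d" by (auto simp: Mt_def colsM_def)
  have "(Y * colsM d g) $$ (r,j) = (Y *\<^sub>v col (colsM d g) j) $ r"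
    using r j Y by (simp add: Mt_def colsM_def)
  also have "\<dots> = (coeff (smult (x0 j) (g j) + smult (x1 j) (g (j-1)) + smult (x2 j) (g (j+1))) r) / cc d r"
    unfolding col_colsM[OF j'] rel[OF j'] vc_index[OF r'] ..
  also have "\<dots> = coeff (g j) r / cc d r * x0 j + (if j \<ge> 1 then coeff (g (j-1)) r / cc d r * x1 j else 0)
     + (if j < d then coeff (g (j+1)) r / cc d r * x2 j else 0)"
    using j' z1 z2 by (cases "j = 0"; cases "j = d") (auto simp: add_divide_distrib algebra_simps)
  also have "\<dots> = (\<Sum>k<d+1. coeff (g k) r / cc d r * (if k = j then x0 j else if k + 1 = j then x1 j else if k = j+1 then x2 j else 0))"
    by (rule sum3b[OF j', symmetric])
  also have "\<dots> = (colsM d g * Mt d x0 x1 x2) $$ (r,j)"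
    using r j by (simp add: Mt_def colsM_def scalar_prod_def row_def col_def lessThan_atLeast0)
  finally show "(Y * colsM d g) $$ (r,j) = (colsM d g * Mt d x0 x1 x2) $$ (r,j)" .
qed (use Y in \<open>auto simp: Mt_def colsM_def\<close>)



lemma factor_eig:
  fixes A :: "'a::field mat"
  assumes A: "A \<in> carrier_mat n n" and v: "v \<in> carrier_vec n" and Av: "A *\<^sub>v v = th \<cdot>\<^sub>v v"
  shows "(c \<cdot>\<^sub>m (A - t \<cdot>\<^sub>m 1\<^sub>m n)) *\<^sub>v v = (c * (th - t)) \<cdot>\<^sub>v v"
proof -
  have sm: "(c \<cdot>\<^sub>m B) *\<^sub>v v = c \<cdot>\<^sub>v (B *\<^sub>v v)" if "B \<in> carrier_mat n n" for B c
    by (rule eq_vecI) (use that v in auto)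
  have "(A - t \<cdot>\<^sub>m 1\<^sub>m n) *\<^sub>v v = A *\<^sub>v v - (t \<cdot>\<^sub>m 1\<^sub>m n) *\<^sub>v v"
    by (rule minus_mult_distrib_mat_vec[OF A _ v]) simp
  also have "(t \<cdot>\<^sub>m 1\<^sub>m n) *\<^sub>v v = t \<cdot>\<^sub>v v"
    using sm[of "1\<^sub>m n" t] v by simp
  finally have e: "(A - t \<cdot>\<^sub>m 1\<^sub>m n) *\<^sub>v v = A *\<^sub>v v - t \<cdot>\<^sub>v v" .
  have "(A - t \<cdot>\<^sub>m 1\<^sub>m n) *\<^sub>v v = (th - t) \<cdot>\<^sub>v v"
    unfolding e Av by (rule eq_vecI) (use v in \<open>auto simp: algebra_simps\<close>)
  moreover have "A - t \<cdot>\<^sub>m 1\<^sub>m n \<in> carrier_mat n n" by (rule minus_carrier_mat) simp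
  ultimately show ?thesis using sm by (simp add: smult_smult_assoc)
qed

lemma foldr_eig:
  fixes A :: "'a::field mat"
  assumes A: "A \<in> carrier_mat n n" and v: "v \<in> carrier_vec n" and Av: "A *\<^sub>v v = th \<cdot>\<^sub>v v"
  shows "foldr (\<lambda>j M. (c j \<cdot>\<^sub>m (A - t j \<cdot>\<^sub>m 1\<^sub>m n)) * M) js (1\<^sub>m n) \<in> carrier_mat n n \<and>
    foldr (\<lambda>j M. (c j \<cdot>\<^sub>m (A - t j \<cdot>\<^sub>m 1\<^sub>m n)) * M) js (1\<^sub>m n) *\<^sub>v v = prod_list (map (\<lambda>j. c j * (th - t j)) js) \<cdot>\<^sub>v v"
proof (induction js)
  case Nil thus ?case using v by simp
next
  case (Cons j js)
  let ?M = "foldr (\<lambda>j M. (c j \<cdot>\<^sub>m (A - t j \<cdot>\<^sub>m 1\<^sub>m n)) * M) js (1\<^sub>m n)"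
  let ?r = "prod_list (map (\<lambda>j. c j * (th - t j)) js)"
  have F: "c j \<cdot>\<^sub>m (A - t j \<cdot>\<^sub>m 1\<^sub>m n) \<in> carrier_mat n n"
    by (intro smult_carrier_mat minus_carrier_mat) simp
  have "(c j \<cdot>\<^sub>m (A - t j \<cdot>\<^sub>m 1\<^sub>m n) * ?M) *\<^sub>v v = (c j \<cdot>\<^sub>m (A - t j \<cdot>\<^sub>m 1\<^sub>m n)) *\<^sub>v (?M *\<^sub>v v)"
    using Cons.IH F v by (intro assoc_mult_mat_vec) auto
  also have "\<dots> = (c j \<cdot>\<^sub>m (A - t j \<cdot>\<^sub>m 1\<^sub>m n)) *\<^sub>v (?r \<cdot>\<^sub>v v)" using Cons.IH by simp
  also have "\<dots> = ?r \<cdot>\<^sub>v ((c j \<cdot>\<^sub>m (A - t j \<cdot>\<^sub>m 1\<^sub>m n)) *\<^sub>v v)" by (rule mult_mat_vec[OF F v])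
  also have "\<dots> = ?r \<cdot>\<^sub>v ((c j * (th - t j)) \<cdot>\<^sub>v v)" unfolding factor_eig[OF A v Av] ..
  also have "\<dots> = prod_list (map (\<lambda>j. c j * (th - t j)) (j # js)) \<cdot>\<^sub>v v"
    by (simp add: smult_smult_assoc mult.commute)
  finally show ?case using Cons.IH F by simp
qed

lemma prod_list_ones: "(\<forall>x\<in>set xs. f x = 1) \<Longrightarrow> prod_list (map f xs) = (1::'a::monoid_mult)"
  by (induction xs) auto

lemma prim_idem_carrier:
  assumes A: "A \<in> carrier_mat (d+1) (d+1)"
  shows "prim_idem d A th i \<in> carrier_mat (d+1) (d+1)"
proof -
  have "\<And>js. foldr (\<lambda>j M. ((1 / (th i - th j)) \<cdot>\<^sub>m (A - th j \<cdot>\<^sub>m 1\<^sub>m (d+1))) * M) js (1\<^sub>m (d+1)) \<in> carrier_mat (d+1) (d+1)"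
  proof -
    fix js show "foldr (\<lambda>j M. ((1 / (th i - th j)) \<cdot>\<^sub>m (A - th j \<cdot>\<^sub>m 1\<^sub>m (d+1))) * M) js (1\<^sub>m (d+1)) \<in> carrier_mat (d+1) (d+1)"
      by (induction js) (use A in auto)
  qed
  thus ?thesis unfolding prim_idem_def .
qed

lemma prim_idem_eig:
  fixes A :: "'a::field mat"
  assumes A: "A \<in> carrier_mat (d+1) (d+1)" and v: "v \<in> carrier_vec (d+1)"
    and Av: "A *\<^sub>v v = th k \<cdot>\<^sub>v v" and k: "k \<le> d" and i: "i \<le> d"
    and dist: "\<forall>i\<le>d. \<forall>j\<le>d. i \<noteq> j \<longrightarrow> th i \<noteq> th j"
  shows "prim_idem d A th i *\<^sub>v v = (if k = i then v else 0\<^sub>v (d+1))"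
proof -
  let ?js = "filter (\<lambda>j. j \<noteq> i) [0..<d+1]"
  have "prim_idem d A th i *\<^sub>v v = prod_list (map (\<lambda>j. (1 / (th i - th j)) * (th k - th j)) ?js) \<cdot>\<^sub>v v"
    unfolding prim_idem_def using foldr_eig[OF A v Av, of "\<lambda>j. 1 / (th i - th j)" th ?js] by blast
  also have "\<dots> = (if k = i then v else 0\<^sub>v (d+1))"
  proof (cases "k = i")
    case True
    have "prod_list (map (\<lambda>j. (1 / (th i - th j)) * (th k - th j)) ?js) = 1"
      by (rule prod_list_ones) (use True dist i in auto)
    thus ?thesis using True by simp
  next
    case False
    have "k \<in> set ?js" using False k by auto
    hence "0 \<in> set (map (\<lambda>j. (1 / (th i - th j)) * (th k - th j)) ?js)"
      unfolding set_map by (rule image_eqI[rotated]) simp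
    hence "prod_list (map (\<lambda>j. (1 / (th i - th j)) * (th k - th j)) ?js) = 0"
      by (simp add: prod_list_zero_iff)
    thus ?thesis using False v by auto
  qed
  finally show ?thesis .
qed



lemma inv_obtain:
  assumes "invertible_mat (C::'a::field mat)" "C \<in> carrier_mat n n"
  obtains B where "B \<in> carrier_mat n n" "C * B = 1\<^sub>m n" "B * C = 1\<^sub>m n"
proof -
  from assms obtain B where B: "C * B = 1\<^sub>m (dim_row C)" "B * C = 1\<^sub>m (dim_row B)"
    unfolding invertible_mat_def inverts_mat_def by auto
  have "dim_col B = n" using arg_cong[OF B(1), of dim_col] assms(2) by simp
  moreover have "dim_row B = n" using arg_cong[OF B(2), of dim_col] assms(2) by simp
  ultimately have "B \<in> carrier_mat n n" by auto
  moreover have "dim_row C = n" using assms(2) by simp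
  ultimately show ?thesis using that B by auto
qed

lemma dim_colsM[simp]: "dim_row (colsM d g) = d+1" "dim_col (colsM d g) = d+1"
  by (simp_all add: colsM_def)

lemma zero_by_cols:
  assumes Z: "(Z::'a::field mat) \<in> carrier_mat (d+1) (d+1)" and inv: "invertible_mat (colsM d g)"
    and cols: "\<And>k. k \<le> d \<Longrightarrow> Z *\<^sub>v vc d (g k) = 0\<^sub>v (d+1)"
  shows "Z = 0\<^sub>m (d+1) (d+1)"
proof -
  let ?C = "colsM d g"
  obtain B where B: "B \<in> carrier_mat (d+1) (d+1)" "?C * B = 1\<^sub>m (d+1)" "B * ?C = 1\<^sub>m (d+1)"
    by (rule inv_obtain[OF inv colsM_carrier])
  have ZC: "Z * ?C = 0\<^sub>m (d+1) (d+1)"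
  proof (rule eq_matI)
    fix r k assume r: "r < dim_row (0\<^sub>m (d+1) (d+1) :: 'a mat)" and k: "k < dim_col (0\<^sub>m (d+1) (d+1) :: 'a mat)"
    hence "k \<le> d" by simp
    have "(Z * ?C) $$ (r,k) = (Z *\<^sub>v col ?C k) $ r" using r k Z by simp
    also have "\<dots> = 0" unfolding col_colsM[OF \<open>k \<le> d\<close>] cols[OF \<open>k \<le> d\<close>] using r by simp
    finally show "(Z * ?C) $$ (r,k) = 0\<^sub>m (d+1) (d+1) $$ (r,k)" using r k by simp
  qed (use Z in auto)
  have "Z = Z * (?C * B)" unfolding B(2) using Z by simp
  also have "\<dots> = (Z * ?C) * B" by (rule assoc_mult_mat[symmetric]) (use Z B in auto)
  also have "\<dots> = 0\<^sub>m (d+1) (d+1)" unfolding ZC using B by simp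
  finally show ?thesis .
qed

lemma vc_carrier_Suc[simp]: "vc d f \<in> carrier_vec (Suc d)" using vc_carrier[of d f] by simp

lemma zmv: "v \<in> carrier_vec m \<Longrightarrow> (0\<^sub>m n m :: 'a::field mat) *\<^sub>v v = 0\<^sub>v n"
  by (rule eq_vecI) auto

lemma mv0: "(A::'a::field mat) \<in> carrier_mat n m \<Longrightarrow> A *\<^sub>v 0\<^sub>v m = 0\<^sub>v n"
  by (rule eq_vecI) (auto simp: row_def)

lemma L7:
  fixes X Y :: "'a::field mat"
  assumes X: "X \<in> carrier_mat (d+1) (d+1)" and Y: "Y \<in> carrier_mat (d+1) (d+1)"
    and inv: "invertible_mat (colsM d g)"
    and eig: "\<And>j. j \<le> d \<Longrightarrow> X *\<^sub>v vc d (g j) = th j \<cdot>\<^sub>v vc d (g j)"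
    and dist: "\<forall>i\<le>d. \<forall>j\<le>d. i \<noteq> j \<longrightarrow> th i \<noteq> th j"
    and rel: "\<And>j. j \<le> d \<Longrightarrow> Y *\<^sub>v vc d (g j) = vc d (smult (x0 j) (g j) + smult (x1 j) (g (j-1)) + smult (x2 j) (g (j+1)))"
    and z1: "x1 0 = 0" and z2: "x2 d = 0"
    and nzc: "\<And>j. j \<le> d \<Longrightarrow> coeff (g j) 0 \<noteq> 0"
    and i: "i \<le> d" and j: "j \<le> d"
  shows "(i + 1 < j \<or> j + 1 < i \<longrightarrow> prim_idem d X th i * Y * prim_idem d X th j = 0\<^sub>m (d+1) (d+1))
   \<and> (j = i + 1 \<longrightarrow> x1 j \<noteq> 0 \<longrightarrow> prim_idem d X th i * Y * prim_idem d X th j \<noteq> 0\<^sub>m (d+1) (d+1))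
   \<and> (i = j + 1 \<longrightarrow> x2 j \<noteq> 0 \<longrightarrow> prim_idem d X th i * Y * prim_idem d X th j \<noteq> 0\<^sub>m (d+1) (d+1))"
proof -
  let ?E = "\<lambda>i. prim_idem d X th i"
  let ?q = "\<lambda>k. vc d (g k)"
  have Ec: "\<And>i. ?E i \<in> carrier_mat (d+1) (d+1)" using prim_idem_carrier[OF X] by blast
  have Eq: "\<And>i k. i \<le> d \<Longrightarrow> k \<le> d \<Longrightarrow> ?E i *\<^sub>v ?q k = (if k = i then ?q k else 0\<^sub>v (d+1))"
  proof -
    fix i k assume ik: "i \<le> d" "k \<le> d"
    show "?E i *\<^sub>v ?q k = (if k = i then ?q k else 0\<^sub>v (d+1))"
      by (rule prim_idem_eig[OF X vc_carrier eig[OF ik(2)] ik(2) ik(1) dist])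
  qed
  let ?Z = "?E i * Y * ?E j"
  have Zc: "?Z \<in> carrier_mat (d+1) (d+1)" by (rule mult_carrier_mat[OF mult_carrier_mat[OF Ec Y] Ec])
  have Zv: "?Z *\<^sub>v ?q k = ?E i *\<^sub>v (Y *\<^sub>v (?E j *\<^sub>v ?q k))" for k
  proof -
    have "?Z *\<^sub>v ?q k = (?E i * Y) *\<^sub>v (?E j *\<^sub>v ?q k)"
      by (rule assoc_mult_mat_vec[OF mult_carrier_mat[OF Ec Y] Ec vc_carrier])
    also have "\<dots> = ?E i *\<^sub>v (Y *\<^sub>v (?E j *\<^sub>v ?q k))"
      by (rule assoc_mult_mat_vec[OF Ec Y]) (rule mult_mat_vec_carrier[OF Ec vc_carrier])
    finally show ?thesis .
  qed
  have Zk: "?Z *\<^sub>v ?q k = 0\<^sub>v (d+1)" if "k \<le> d" "k \<noteq> j" for k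
    unfolding Zv Eq[OF j that(1)] using that mv0[OF Ec] mv0[OF Y] by simp
  have Zj: "?Z *\<^sub>v ?q j = x0 j \<cdot>\<^sub>v (?E i *\<^sub>v ?q j) + x1 j \<cdot>\<^sub>v (?E i *\<^sub>v ?q (j-1)) + x2 j \<cdot>\<^sub>v (?E i *\<^sub>v ?q (j+1))"
  proof -
    have Ej: "?E j *\<^sub>v ?q j = ?q j" using Eq[OF j j] by simp
    have "?Z *\<^sub>v ?q j = ?E i *\<^sub>v (x0 j \<cdot>\<^sub>v ?q j + x1 j \<cdot>\<^sub>v ?q (j-1) + x2 j \<cdot>\<^sub>v ?q (j+1))"
      unfolding Zv Ej rel[OF j] vc_add vc_smult ..
    also have "\<dots> = ?E i *\<^sub>v (x0 j \<cdot>\<^sub>v ?q j + x1 j \<cdot>\<^sub>v ?q (j-1)) + ?E i *\<^sub>v (x2 j \<cdot>\<^sub>v ?q (j+1))"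
      by (rule mult_add_distrib_mat_vec[OF Ec]) auto
    also have "?E i *\<^sub>v (x0 j \<cdot>\<^sub>v ?q j + x1 j \<cdot>\<^sub>v ?q (j-1)) = ?E i *\<^sub>v (x0 j \<cdot>\<^sub>v ?q j) + ?E i *\<^sub>v (x1 j \<cdot>\<^sub>v ?q (j-1))"
      by (rule mult_add_distrib_mat_vec[OF Ec]) auto
    finally show ?thesis by (simp only: mult_mat_vec[OF Ec vc_carrier])
  qed
  have T1: "x1 j \<cdot>\<^sub>v (?E i *\<^sub>v ?q (j-1)) = (if j = i + 1 then x1 j \<cdot>\<^sub>v ?q i else 0\<^sub>v (d+1))"
  proof (cases "j = 0")
    case True thus ?thesis using z1 Ec[of i] by auto
  next
    case False thus ?thesis using Eq[OF i, of "j-1"] j by auto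
  qed
  have T2: "x2 j \<cdot>\<^sub>v (?E i *\<^sub>v ?q (j+1)) = (if i = j + 1 then x2 j \<cdot>\<^sub>v ?q i else 0\<^sub>v (d+1))"
  proof (cases "j = d")
    case True thus ?thesis using z2 Ec[of i] i by auto
  next
    case False thus ?thesis using Eq[OF i, of "j+1"] j by auto
  qed
  have T0: "x0 j \<cdot>\<^sub>v (?E i *\<^sub>v ?q j) = (if i = j then x0 j \<cdot>\<^sub>v ?q i else 0\<^sub>v (d+1))"
    using Eq[OF i j] by auto
  have nzq: "x \<noteq> 0 \<Longrightarrow> x \<cdot>\<^sub>v ?q i \<noteq> 0\<^sub>v (d+1)" for x
  proof
    assume "x \<noteq> 0" "x \<cdot>\<^sub>v ?q i = 0\<^sub>v (d+1)"
    hence "(x \<cdot>\<^sub>v ?q i) $ 0 = 0" by simp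
    thus False using \<open>x \<noteq> 0\<close> nzc[OF i] by (simp add: vc_0)
  qed
  show ?thesis
  proof (intro conjI impI)
    assume "i + 1 < j \<or> j + 1 < i"
    hence "?Z *\<^sub>v ?q k = 0\<^sub>v (d+1)" if "k \<le> d" for k
      using Zk[OF that] Zj T0 T1 T2 by (cases "k = j") auto
    thus "?Z = 0\<^sub>m (d+1) (d+1)" by (rule zero_by_cols[OF Zc inv])
  next
    assume "j = i + 1" "x1 j \<noteq> 0"
    hence e: "?Z *\<^sub>v ?q j = x1 j \<cdot>\<^sub>v ?q i" using Zj T0 T1 T2 by auto
    show "?Z \<noteq> 0\<^sub>m (d+1) (d+1)"
    proof
      assume "?Z = 0\<^sub>m (d+1) (d+1)"
      hence "?Z *\<^sub>v ?q j = 0\<^sub>v (d+1)" using zmv[OF vc_carrier[of d "g j"], of "d+1"] by simp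
      thus False using e nzq[OF \<open>x1 j \<noteq> 0\<close>] by simp
    qed
  next
    assume "i = j + 1" "x2 j \<noteq> 0"
    hence e: "?Z *\<^sub>v ?q j = x2 j \<cdot>\<^sub>v ?q i" using Zj T0 T1 T2 by auto
    show "?Z \<noteq> 0\<^sub>m (d+1) (d+1)"
    proof
      assume "?Z = 0\<^sub>m (d+1) (d+1)"
      hence "?Z *\<^sub>v ?q j = 0\<^sub>v (d+1)" using zmv[OF vc_carrier[of d "g j"], of "d+1"] by simp
      thus False using e nzq[OF \<open>x2 j \<noteq> 0\<close>] by simp
    qed
  qed
qed



lemma split_vec_Suc: "split_vec d A th v (Suc i) = (A - th i \<cdot>\<^sub>m 1\<^sub>m (d+1)) *\<^sub>v split_vec d A th v i"
  by (simp add: split_vec_def)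

lemma split_vec_0: "split_vec d A th v 0 = v"
  by (simp add: split_vec_def)

lemma mat_of_cols_colsM:
  assumes "\<And>i. i \<le> d \<Longrightarrow> f i = vc d (g i)"
  shows "mat_of_cols (d+1) (map f [0..<d+1]) = colsM d g"
proof (rule eq_matI)
  fix r i assume r: "r < dim_row (colsM d g)" and i: "i < dim_col (colsM d g)"
  hence "r \<le> d" "i \<le> d" by auto
  thus "mat_of_cols (d+1) (map f [0..<d+1]) $$ (r,i) = colsM d g $$ (r,i)"
    using assms[of i] by (simp add: mat_of_cols_index colsM_def vc_def del: upt_Suc)
qed auto

lemma split_gen:
  fixes A As :: "'a::field mat"
  assumes nz: "\<forall>k. 0 < k \<and> k \<le> d \<longrightarrow> (of_nat k::'a) \<noteq> 0"
    and A: "A \<in> carrier_mat (d+1) (d+1)" and As: "As \<in> carrier_mat (d+1) (d+1)"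
    and ab: "a \<noteq> b" and kap: "\<forall>i\<le>d. \<kappa> i \<noteq> 0" and k0: "\<kappa> 0 = 1"
    and g: "g = (\<lambda>i. smult (\<kappa> i) (fam d a b i))"
    and step: "\<And>i. i < d \<Longrightarrow> (A - th i \<cdot>\<^sub>m 1\<^sub>m (d+1)) *\<^sub>v vc d (g i) = vc d (g (Suc i))"
    and eigAs: "\<And>j. j \<le> d \<Longrightarrow> As *\<^sub>v vc d (g j) = vc d (smult (ths j) (g j) + smult (phi j) (g (j-1)) + smult 0 (g (j+1)))"
    and p0: "phi 0 = 0"
    and dist: "\<forall>i\<le>d. \<forall>j\<le>d. i \<noteq> j \<longrightarrow> ths i \<noteq> ths j"
  shows "first_split d A th As ths phi"
proof -
  let ?w = "vc d (g 0)"
  have e0: "As *\<^sub>v ?w = ths 0 \<cdot>\<^sub>v ?w"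
    using eigAs[of 0] p0 by (simp add: vc_add vc_smult)
  have v: "prim_idem d As ths 0 *\<^sub>v ?w = ?w"
    using prim_idem_eig[OF As vc_carrier e0 _ _ dist] by simp
  have sv: "split_vec d A th ?w i = vc d (g i)" if "i \<le> d" for i
    using that
  proof (induction i)
    case 0 thus ?case by (simp add: split_vec_0)
  next
    case (Suc i)
    thus ?case using step[of i] by (simp add: split_vec_Suc)
  qed
  have U: "mat_of_cols (d+1) (map (split_vec d A th ?w) [0..<d+1]) = colsM d g"
    by (rule mat_of_cols_colsM) (rule sv)
  have inv: "invertible_mat (colsM d g)" unfolding g by (rule inv_fam[OF nz ab kap])
  have nzw: "?w \<noteq> 0\<^sub>v (d+1)" by (rule vc_nz) (simp add: g k0 fam_coeff0)
  have L: "As * colsM d g = colsM d g * Mt d ths phi (\<lambda>_. 0)"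
    by (rule L6[OF As eigAs p0]) auto
  have B: "Mt d ths phi (\<lambda>_. 0) = mat (d+1) (d+1) (\<lambda>(i, j). if i = j then ths i else if j = i + 1 then phi j else 0)"
    by (rule eq_matI) (auto simp: Mt_def)
  show ?thesis unfolding first_split_def Let_def
    by (rule bexI[of _ ?w]) (use v U inv nzw L B in auto)
qed



lemma rel_fam:
  fixes a b :: "'a::field"
  assumes nz: "\<forall>k. 0 < k \<and> k \<le> d \<longrightarrow> (of_nat k::'a) \<noteq> 0"
    and i: "i \<le> d"
    and e0: "\<beta>*(of_nat (d-i)*a + of_nat i*b) + \<gamma> = x0 + x1 + x2"
    and e1: "of_nat d*(\<alpha> + \<beta>*a*b) + \<gamma>*(a+b) = x0*(a+b) + 2*a*x1 + 2*b*x2"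
    and e2: "\<alpha>*(of_nat (d-i)*b + of_nat i*a) + \<gamma>*a*b = x0*a*b + x1*a^2 + x2*b^2"
    and z1: "i = 0 \<Longrightarrow> x1 = 0" and z2: "i = d \<Longrightarrow> x2 = 0"
  shows "Mab d \<alpha> \<beta> \<gamma> *\<^sub>v vc d (fam d a b i) = vc d (smult x0 (fam d a b i) + smult x1 (fam d a b (i-1))
           + smult x2 (fam d a b (i+1)))"
  using L1[OF nz fam_deg[OF i], of \<alpha> \<beta> \<gamma> a b] op_fam[OF i e0 e1 e2 z1 z2] by simp

lemma inst1:
  assumes nz: "\<forall>k. 0 < k \<and> k \<le> d \<longrightarrow> (of_nat k::'a::field) \<noteq> 0" and i: "i \<le> d"
  shows "Mab d 1 1 0 *\<^sub>v vc d (fam d (1::'a) (-1) i) = vc d (smult (of_nat d - 2*of_nat i) (fam d 1 (-1) i)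
     + smult 0 (fam d 1 (-1) (i-1)) + smult 0 (fam d 1 (-1) (i+1)))"
  by (rule rel_fam[OF nz i]) (use i in \<open>auto simp: of_nat_diff algebra_simps\<close>)

lemma inst2:
  fixes s :: "'a::field"
  assumes nz: "\<forall>k. 0 < k \<and> k \<le> d \<longrightarrow> (of_nat k::'a) \<noteq> 0" and i: "i \<le> d"
    and s: "s \<noteq> 0" and two: "(2::'a) \<noteq> 0"
  shows "Mab d s (inverse s) 0 *\<^sub>v vc d (fam d (1::'a) (-1) i) = vc d (smult ((s + inverse s)/2 * (of_nat d - 2*of_nat i)) (fam d 1 (-1) i)
     + smult ((s - inverse s)/2 * of_nat i) (fam d 1 (-1) (i-1)) + smult (- ((s - inverse s)/2 * (of_nat d - of_nat i))) (fam d 1 (-1) (i+1)))"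
proof -
  have four: "(4::'a) \<noteq> 0" using two by (metis mult_2_right numeral_Bit0 mult_eq_0_iff)
  have eight: "(8::'a) \<noteq> 0" using two four by (metis mult_2_right numeral_Bit0 mult_eq_0_iff)
  show ?thesis by (rule rel_fam[OF nz i]) (use i s two four eight in \<open>auto simp: of_nat_diff field_simps\<close>)
qed

lemma inst3:
  fixes s :: "'a::field"
  assumes nz: "\<forall>k. 0 < k \<and> k \<le> d \<longrightarrow> (of_nat k::'a) \<noteq> 0" and i: "i \<le> d"
    and s: "s \<noteq> 0"
  shows "Mab d s (inverse s) 0 *\<^sub>v vc d (fam d s (-s) i) = vc d (smult (of_nat d - 2*of_nat i) (fam d s (-s) i)
     + smult 0 (fam d s (-s) (i-1)) + smult 0 (fam d s (-s) (i+1)))"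
  by (rule rel_fam[OF nz i]) (use i s in \<open>auto simp: of_nat_diff field_simps power2_eq_square\<close>)

lemma inst4:
  fixes s :: "'a::field"
  assumes nz: "\<forall>k. 0 < k \<and> k \<le> d \<longrightarrow> (of_nat k::'a) \<noteq> 0" and i: "i \<le> d"
    and s: "s \<noteq> 0" and two: "(2::'a) \<noteq> 0"
  shows "Mab d 1 1 0 *\<^sub>v vc d (fam d s (-s) i) = vc d (smult ((s + inverse s)/2 * (of_nat d - 2*of_nat i)) (fam d s (-s) i)
     + smult ((inverse s - s)/2 * of_nat i) (fam d s (-s) (i-1)) + smult (- ((inverse s - s)/2 * (of_nat d - of_nat i))) (fam d s (-s) (i+1)))"
proof -
  have four: "(4::'a) \<noteq> 0" using two by (metis mult_2_right numeral_Bit0 mult_eq_0_iff)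
  have eight: "(8::'a) \<noteq> 0" using two four by (metis mult_2_right numeral_Bit0 mult_eq_0_iff)
  show ?thesis by (rule rel_fam[OF nz i]) (use i s two four eight in \<open>auto simp: of_nat_diff field_simps power2_eq_square\<close>)
qed

lemma inst5:
  fixes s :: "'a::field"
  assumes nz: "\<forall>k. 0 < k \<and> k \<le> d \<longrightarrow> (of_nat k::'a) \<noteq> 0" and i: "i \<le> d"
  shows "Mab d 1 1 (- (of_nat d - 2*of_nat i)) *\<^sub>v vc d (fam d s (-1) i) = vc d (smult 0 (fam d s (-1) i)
     + smult 0 (fam d s (-1) (i-1)) + smult (of_nat (d - i) * (s - 1)) (fam d s (-1) (i+1)))"
  by (rule rel_fam[OF nz i]) (use i in \<open>auto simp: of_nat_diff algebra_simps\<close>)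

lemma inst6:
  fixes s :: "'a::field"
  assumes nz: "\<forall>k. 0 < k \<and> k \<le> d \<longrightarrow> (of_nat k::'a) \<noteq> 0" and i: "i \<le> d"
    and s: "s \<noteq> 0"
  shows "Mab d s (inverse s) 0 *\<^sub>v vc d (fam d s (-1) i) = vc d (smult (of_nat d - 2*of_nat i) (fam d s (-1) i)
     + smult (of_nat i * (s - 1) / s) (fam d s (-1) (i-1)) + smult 0 (fam d s (-1) (i+1)))"
  by (rule rel_fam[OF nz i]) (use i s in \<open>auto simp: of_nat_diff field_simps power2_eq_square\<close>)

lemma inst7:
  fixes s :: "'a::field"
  assumes nz: "\<forall>k. 0 < k \<and> k \<le> d \<longrightarrow> (of_nat k::'a) \<noteq> 0" and i: "i \<le> d"
  shows "Mab d 1 1 (- (2*of_nat i - of_nat d)) *\<^sub>v vc d (fam d s 1 i) = vc d (smult 0 (fam d s 1 i)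
     + smult 0 (fam d s 1 (i-1)) + smult (of_nat (d - i) * (s + 1)) (fam d s 1 (i+1)))"
  by (rule rel_fam[OF nz i]) (use i in \<open>auto simp: of_nat_diff algebra_simps\<close>)

lemma inst8:
  fixes s :: "'a::field"
  assumes nz: "\<forall>k. 0 < k \<and> k \<le> d \<longrightarrow> (of_nat k::'a) \<noteq> 0" and i: "i \<le> d"
    and s: "s \<noteq> 0"
  shows "Mab d s (inverse s) 0 *\<^sub>v vc d (fam d s 1 i) = vc d (smult (of_nat d - 2*of_nat i) (fam d s 1 i)
     + smult (of_nat i * (s + 1) / s) (fam d s 1 (i-1)) + smult 0 (fam d s 1 (i+1)))"
  by (rule rel_fam[OF nz i]) (use i s in \<open>auto simp: of_nat_diff field_simps power2_eq_square\<close>)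



lemma Mab_carrier[simp]: "Mab d \<alpha> \<beta> \<gamma> \<in> carrier_mat (d+1) (d+1)" by (simp add: Mab_def)

lemma Mab_sm:
  assumes "Mab d \<alpha> \<beta> \<gamma> *\<^sub>v vc d f = vc d P"
  shows "Mab d \<alpha> \<beta> \<gamma> *\<^sub>v vc d (smult c f) = vc d (smult c P)"
  unfolding vc_smult mult_mat_vec[OF Mab_carrier vc_carrier] assms ..

lemma Mab_shift: "Mab d \<alpha> \<beta> \<gamma> - t \<cdot>\<^sub>m 1\<^sub>m (d+1) = Mab d \<alpha> \<beta> (\<gamma> - t)"
  by (rule eq_matI) (auto simp: Mab_def)

lemma scale_rel:
  assumes "k * x1 = ph * k1"
  shows "smult k (smult x0 f + smult x1 f1 + smult 0 f2) = smult x0 (smult k f) + smult ph (smult k1 f1) + smult 0 (smult k2 f2)"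
proof -
  have "smult k (smult x1 f1) = smult ph (smult k1 f1)" using assms by (simp add: mult.commute)
  thus ?thesis by (simp add: smult_add_right mult.commute)
qed

lemma kap_nz:
  assumes nz: "\<forall>k. 0 < k \<and> k \<le> d \<longrightarrow> (of_nat k::'a::field) \<noteq> 0" and c: "c \<noteq> 0"
  shows "\<forall>i\<le>d. (\<Prod>k<i. of_nat (d - k) * c) \<noteq> (0::'a)"
proof (intro allI impI)
  fix i assume i: "i \<le> d"
  have "\<forall>k<i. (of_nat (d - k)::'a) * c \<noteq> 0"
  proof (intro allI impI)
    fix k assume "k < i"
    hence "(of_nat (d - k)::'a) \<noteq> 0" by (intro nzD[OF nz]) (use i in auto)
    thus "(of_nat (d - k)::'a) * c \<noteq> 0" using c by simp
  qed
  thus "(\<Prod>k<i. of_nat (d - k) * c) \<noteq> (0::'a)" by (simp add: prod_zero_iff del: of_nat_diff)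
qed

theorem proposition7p1:
  fixes s :: "'a::alg_closed_field" and d :: nat and A As :: "'a mat"
  assumes "d \<ge> 3" and "s \<noteq> 0"
    and "CHAR('a) = 0 \<or> CHAR('a) > d"
    and "s ^ 2 \<noteq> 1"
    and "A = mat (d+1) (d+1) (\<lambda>(i, j). if i = j + 1 then 1
              else if j = i + 1 then of_nat (j * (d - j + 1)) else 0)"
    and "As = mat (d+1) (d+1) (\<lambda>(i, j). if i = j + 1 then s
              else if j = i + 1 then inverse s * of_nat (j * (d - j + 1)) else 0)"
  shows "leonard_pair d A As \<and> fundamental_parameter d A As 2 \<and>
         parameter_array d A As
           (\<lambda>i. of_int (int d - 2 * int i)) (\<lambda>i. of_int (int d - 2 * int i))
           (\<lambda>i. of_nat (i * (d - i + 1)) * (s + inverse s - 2))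
           (\<lambda>i. of_nat (i * (d - i + 1)) * (s + inverse s + 2))"
proof -
  let ?th = "\<lambda>i. of_int (int d - 2 * int i) :: 'a"
  have thv: "\<And>i. ?th i = of_nat d - 2 * of_nat i" by simp
  have nz: "\<forall>k. 0 < k \<and> k \<le> d \<longrightarrow> (of_nat k::'a) \<noteq> 0"
  proof (intro allI impI)
    fix k assume k: "0 < k \<and> k \<le> d"
    show "(of_nat k::'a) \<noteq> 0"
    proof
      assume "(of_nat k::'a) = 0"
      hence "CHAR('a) dvd k" by (simp add: of_nat_eq_0_iff_char_dvd)
      moreover have "CHAR('a) \<noteq> 0 \<Longrightarrow> CHAR('a) > k" using assms(3) k by auto
      ultimately show False using k by (cases "CHAR('a) = 0") (auto dest: dvd_imp_le)
    qed
  qed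
  have two: "(2::'a) \<noteq> 0"
  proof -
    have "(of_nat 2::'a) \<noteq> 0" by (rule nzD[OF nz]) (use assms(1) in auto)
    thus ?thesis by simp
  qed
  have s0: "s \<noteq> 0" by (rule assms(2))
  have s1: "s \<noteq> 1" "s \<noteq> -1" using assms(4) by auto
  have sinv: "inverse s - s \<noteq> 0" "s - inverse s \<noteq> 0"
  proof -
    have "inverse s \<noteq> s"
    proof
      assume "inverse s = s"
      hence "s * s = 1" using s0 by (metis right_inverse)
      thus False using assms(4) by (simp add: power2_eq_square)
    qed
    thus "inverse s - s \<noteq> 0" "s - inverse s \<noteq> 0" by auto
  qed
  have hA: "A = Mab d 1 1 0" unfolding assms(5) Mab_def by (rule eq_matI) auto
  have hAs: "As = Mab d s (inverse s) 0" unfolding assms(6) Mab_def by (rule eq_matI) auto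
  have Ac: "A \<in> carrier_mat (d+1) (d+1)" unfolding hA by (rule Mab_carrier)
  have Asc: "As \<in> carrier_mat (d+1) (d+1)" unfolding hAs by (rule Mab_carrier)
  have dist: "\<forall>i\<le>d. \<forall>j\<le>d. i \<noteq> j \<longrightarrow> ?th i \<noteq> ?th j"
  proof (intro allI impI)
    fix i j assume ij: "i \<le> d" "j \<le> d" "i \<noteq> j"
    show "?th i \<noteq> ?th j"
    proof
      assume "?th i = ?th j"
      hence "(2::'a) * of_nat i = 2 * of_nat j" unfolding thv by simp
      hence e: "(of_nat i::'a) = of_nat j" using two by simp
      show False
      proof (cases "i < j")
        case True
        have "(of_nat (j - i)::'a) \<noteq> 0" by (rule nzD[OF nz]) (use True ij in auto)
        thus False using e True by (simp add: of_nat_diff)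
      next
        case False
        have "(of_nat (i - j)::'a) \<noteq> 0" by (rule nzD[OF nz]) (use False ij in auto)
        thus False using e False by (simp add: of_nat_diff)
      qed
    qed
  qed
  let ?gQ = "fam d (1::'a) (-1)" and ?gP = "fam d s (-s)"
  let ?x0Q = "\<lambda>j. (s + inverse s)/2 * (of_nat d - 2*of_nat j)"
  let ?x1Q = "\<lambda>j. (s - inverse s)/2 * of_nat j"
  let ?x2Q = "\<lambda>j. - ((s - inverse s)/2 * (of_nat d - of_nat j))"
  let ?x0P = "\<lambda>j. (s + inverse s)/2 * (of_nat d - 2*of_nat j)"
  let ?x1P = "\<lambda>j. (inverse s - s)/2 * of_nat j"
  let ?x2P = "\<lambda>j. - ((inverse s - s)/2 * (of_nat d - of_nat j))"
  have relQA: "\<And>j. j \<le> d \<Longrightarrow> A *\<^sub>v vc d (?gQ j) = vc d (smult (?th j) (?gQ j) + smult 0 (?gQ (j-1)) + smult 0 (?gQ (j+1)))"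
    unfolding hA thv by (rule inst1[OF nz])
  have relQAs: "\<And>j. j \<le> d \<Longrightarrow> As *\<^sub>v vc d (?gQ j) = vc d (smult (?x0Q j) (?gQ j) + smult (?x1Q j) (?gQ (j-1)) + smult (?x2Q j) (?gQ (j+1)))"
    unfolding hAs by (rule inst2[OF nz _ s0 two])
  have relPAs: "\<And>j. j \<le> d \<Longrightarrow> As *\<^sub>v vc d (?gP j) = vc d (smult (?th j) (?gP j) + smult 0 (?gP (j-1)) + smult 0 (?gP (j+1)))"
    unfolding hAs thv by (rule inst3[OF nz _ s0])
  have relPA: "\<And>j. j \<le> d \<Longrightarrow> A *\<^sub>v vc d (?gP j) = vc d (smult (?x0P j) (?gP j) + smult (?x1P j) (?gP (j-1)) + smult (?x2P j) (?gP (j+1)))"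
    unfolding hA by (rule inst4[OF nz _ s0 two])
  have eigQ: "\<And>j. j \<le> d \<Longrightarrow> A *\<^sub>v vc d (?gQ j) = ?th j \<cdot>\<^sub>v vc d (?gQ j)"
    using relQA by (simp add: vc_smult)
  have eigP: "\<And>j. j \<le> d \<Longrightarrow> As *\<^sub>v vc d (?gP j) = ?th j \<cdot>\<^sub>v vc d (?gP j)"
    using relPAs by (simp add: vc_smult)
  have invQ: "invertible_mat (colsM d ?gQ)"
  proof -
    have "(1::'a) \<noteq> -1"
    proof
      assume "(1::'a) = -1"
      hence "(1::'a) + 1 = 0" by (simp add: eq_neg_iff_add_eq_0)
      thus False using two by (simp add: one_add_one)
    qed
    hence "invertible_mat (colsM d (\<lambda>i. smult 1 (fam d (1::'a) (-1) i)))"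
      by (intro inv_fam[OF nz]) auto
    thus ?thesis by (simp only: smult_1_left)
  qed
  have invP: "invertible_mat (colsM d ?gP)"
  proof -
    have "s \<noteq> -s"
    proof
      assume "s = -s"
      hence "s + s = 0" by (simp only: eq_neg_iff_add_eq_0)
      hence "2 * s = 0" by (simp only: mult_2)
      thus False using s0 two by simp
    qed
    hence "invertible_mat (colsM d (\<lambda>i. smult 1 (fam d s (-s) i)))"
      by (intro inv_fam[OF nz]) auto
    thus ?thesis by (simp only: smult_1_left)
  qed
  have nzcQ: "\<And>j. coeff (?gQ j) 0 \<noteq> 0" and nzcP: "\<And>j. coeff (?gP j) 0 \<noteq> 0" by (simp_all add: fam_coeff0)
  have ofn: "\<And>j. j < d \<Longrightarrow> (of_nat d - of_nat j :: 'a) \<noteq> 0"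
  proof -
    fix j assume "j < d"
    hence "(of_nat (d - j)::'a) \<noteq> 0" by (intro nzD[OF nz]) auto
    thus "(of_nat d - of_nat j :: 'a) \<noteq> 0" using \<open>j < d\<close> by (simp add: of_nat_diff)
  qed
  have ofn1: "\<And>j. 0 < j \<Longrightarrow> j \<le> d \<Longrightarrow> (of_nat j :: 'a) \<noteq> 0" using nz by blast
  have LP: "leonard_pair d A As"
  proof -
    have AP: "A * colsM d ?gP = colsM d ?gP * Mt d ?x0P ?x1P ?x2P"
      by (rule L6[OF Ac relPA]) auto
    have AsP: "As * colsM d ?gP = colsM d ?gP * Mt d ?th (\<lambda>_. 0) (\<lambda>_. 0)"
      by (rule L6[OF Asc relPAs]) auto
    have AsQ: "As * colsM d ?gQ = colsM d ?gQ * Mt d ?x0Q ?x1Q ?x2Q"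
      by (rule L6[OF Asc relQAs]) auto
    have AQ: "A * colsM d ?gQ = colsM d ?gQ * Mt d ?th (\<lambda>_. 0) (\<lambda>_. 0)"
      by (rule L6[OF Ac relQA]) auto
    have diag: "diagonal_mat (Mt d ?th (\<lambda>_. 0) (\<lambda>_. 0))"
      unfolding diagonal_mat_def Mt_def by auto
    have irP: "irred_tridiag (d+1) (Mt d ?x0P ?x1P ?x2P)"
      unfolding irred_tridiag_def
    proof (intro conjI allI impI)
      show "Mt d ?x0P ?x1P ?x2P \<in> carrier_mat (d+1) (d+1)" by (simp add: Mt_def)
    next
      fix i j assume "i < d+1" "j < d+1" "i + 1 < j \<or> j + 1 < i"
      thus "Mt d ?x0P ?x1P ?x2P $$ (i, j) = 0" by (auto simp: Mt_def)
    next
      fix i assume i: "i + 1 < d + 1"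
      show "Mt d ?x0P ?x1P ?x2P $$ (i, i+1) \<noteq> 0"
        using i sinv two ofn1[of "i+1"] by (simp add: Mt_def)
      show "Mt d ?x0P ?x1P ?x2P $$ (i+1, i) \<noteq> 0"
        using i sinv two ofn[of i] by (simp add: Mt_def)
    qed
    have irQ: "irred_tridiag (d+1) (Mt d ?x0Q ?x1Q ?x2Q)"
      unfolding irred_tridiag_def
    proof (intro conjI allI impI)
      show "Mt d ?x0Q ?x1Q ?x2Q \<in> carrier_mat (d+1) (d+1)" by (simp add: Mt_def)
    next
      fix i j assume "i < d+1" "j < d+1" "i + 1 < j \<or> j + 1 < i"
      thus "Mt d ?x0Q ?x1Q ?x2Q $$ (i, j) = 0" by (auto simp: Mt_def)
    next
      fix i assume i: "i + 1 < d + 1"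
      show "Mt d ?x0Q ?x1Q ?x2Q $$ (i, i+1) \<noteq> 0"
        using i sinv two ofn1[of "i+1"] by (simp add: Mt_def)
      show "Mt d ?x0Q ?x1Q ?x2Q $$ (i+1, i) \<noteq> 0"
        using i sinv two ofn[of i] by (simp add: Mt_def)
    qed
    have Mc: "\<And>x0 x1 x2. Mt d x0 x1 x2 \<in> carrier_mat (d+1) (d+1)" by (simp add: Mt_def)
    show ?thesis unfolding leonard_pair_def
    proof (intro conjI Ac Asc)
      show "\<exists>P M N. P \<in> carrier_mat (d+1) (d+1) \<and> invertible_mat P \<and>
        A * P = P * M \<and> As * P = P * N \<and> irred_tridiag (d+1) M \<and>
        N \<in> carrier_mat (d+1) (d+1) \<and> diagonal_mat N"
        by (rule exI[of _ "colsM d ?gP"], rule exI[of _ "Mt d ?x0P ?x1P ?x2P"], rule exI[of _ "Mt d ?th (\<lambda>_. 0) (\<lambda>_. 0)"])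
           (intro conjI colsM_carrier invP AP AsP irP Mc diag)
      show "\<exists>Q M N. Q \<in> carrier_mat (d+1) (d+1) \<and> invertible_mat Q \<and>
        As * Q = Q * M \<and> A * Q = Q * N \<and> irred_tridiag (d+1) M \<and>
        N \<in> carrier_mat (d+1) (d+1) \<and> diagonal_mat N"
        by (rule exI[of _ "colsM d ?gQ"], rule exI[of _ "Mt d ?x0Q ?x1Q ?x2Q"], rule exI[of _ "Mt d ?th (\<lambda>_. 0) (\<lambda>_. 0)"])
           (intro conjI colsM_carrier invQ AsQ AQ irQ Mc diag)
    qed
  qed
  let ?E = "\<lambda>i. prim_idem d A ?th i" and ?Es = "\<lambda>i. prim_idem d As ?th i"
  have LS: "leonard_system d A ?th ?E As ?th ?Es"
  proof -
    have eA: "\<forall>i\<le>d. is_eigenvalue (d+1) A (?th i)"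
      unfolding is_eigenvalue_def
    proof (intro allI impI)
      fix i assume i: "i \<le> d"
      show "\<exists>v\<in>carrier_vec (d+1). v \<noteq> 0\<^sub>v (d+1) \<and> A *\<^sub>v v = ?th i \<cdot>\<^sub>v v"
        by (rule bexI[of _ "vc d (?gQ i)"]) (use eigQ[OF i] vc_nz[OF nzcQ] in auto)
    qed
    have eAs: "\<forall>i\<le>d. is_eigenvalue (d+1) As (?th i)"
      unfolding is_eigenvalue_def
    proof (intro allI impI)
      fix i assume i: "i \<le> d"
      show "\<exists>v\<in>carrier_vec (d+1). v \<noteq> 0\<^sub>v (d+1) \<and> As *\<^sub>v v = ?th i \<cdot>\<^sub>v v"
        by (rule bexI[of _ "vc d (?gP i)"]) (use eigP[OF i] vc_nz[OF nzcP] in auto)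
    qed
    have z1Q: "?x1Q 0 = 0" and z2Q: "?x2Q d = 0" and z1P: "?x1P 0 = 0" and z2P: "?x2P d = 0" by simp_all
    have LQ: "\<And>i j. i \<le> d \<Longrightarrow> j \<le> d \<Longrightarrow> (i + 1 < j \<or> j + 1 < i \<longrightarrow> ?E i * As * ?E j = 0\<^sub>m (d+1) (d+1))
       \<and> (j = i + 1 \<longrightarrow> ?x1Q j \<noteq> 0 \<longrightarrow> ?E i * As * ?E j \<noteq> 0\<^sub>m (d+1) (d+1))
       \<and> (i = j + 1 \<longrightarrow> ?x2Q j \<noteq> 0 \<longrightarrow> ?E i * As * ?E j \<noteq> 0\<^sub>m (d+1) (d+1))"
      by (rule L7[OF Ac Asc invQ eigQ dist relQAs z1Q z2Q nzcQ])
    have LPm: "\<And>i j. i \<le> d \<Longrightarrow> j \<le> d \<Longrightarrow> (i + 1 < j \<or> j + 1 < i \<longrightarrow> ?Es i * A * ?Es j = 0\<^sub>m (d+1) (d+1))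
       \<and> (j = i + 1 \<longrightarrow> ?x1P j \<noteq> 0 \<longrightarrow> ?Es i * A * ?Es j \<noteq> 0\<^sub>m (d+1) (d+1))
       \<and> (i = j + 1 \<longrightarrow> ?x2P j \<noteq> 0 \<longrightarrow> ?Es i * A * ?Es j \<noteq> 0\<^sub>m (d+1) (d+1))"
      by (rule L7[OF Asc Ac invP eigP dist relPA z1P z2P nzcP])
    have x1nz: "\<And>j. 0 < j \<Longrightarrow> j \<le> d \<Longrightarrow> ?x1Q j \<noteq> 0 \<and> ?x1P j \<noteq> 0"
      using sinv two ofn1 by simp
    have x2nz: "\<And>j. j < d \<Longrightarrow> ?x2Q j \<noteq> 0 \<and> ?x2P j \<noteq> 0"
      using sinv two ofn by simp
    show ?thesis unfolding leonard_system_def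
    proof (intro conjI Ac Asc eA eAs dist allI impI refl)
      fix i j assume ij: "i \<le> d" "j \<le> d" "i + 1 < j \<or> j + 1 < i"
      show "?E i * As * ?E j = 0\<^sub>m (d+1) (d+1)" using LQ[OF ij(1,2)] ij(3) by blast
      show "?Es i * A * ?Es j = 0\<^sub>m (d+1) (d+1)" using LPm[OF ij(1,2)] ij(3) by blast
    next
      fix i j assume ij: "i \<le> d" "j \<le> d" "i = j + 1 \<or> j = i + 1"
      show "?E i * As * ?E j \<noteq> 0\<^sub>m (d+1) (d+1)"
      proof (cases "j = i + 1")
        case True thus ?thesis using LQ[OF ij(1,2)] x1nz[of j] ij by auto
      next
        case False thus ?thesis using LQ[OF ij(1,2)] x2nz[of j] ij by auto
      qed
      show "?Es i * A * ?Es j \<noteq> 0\<^sub>m (d+1) (d+1)"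
      proof (cases "j = i + 1")
        case True thus ?thesis using LPm[OF ij(1,2)] x1nz[of j] ij by auto
      next
        case False thus ?thesis using LPm[OF ij(1,2)] x2nz[of j] ij by auto
      qed
    qed
  qed
  have FP: "fundamental_parameter d A As 2"
    unfolding fundamental_parameter_def
  proof (intro exI conjI allI impI)
    show "leonard_system d A ?th ?E As ?th ?Es" by (rule LS)
    fix i assume i: "2 \<le> i \<and> i \<le> d - 1"
    have a: "(of_nat (i-2)::'a) = of_nat i - 2" using i by (simp add: of_nat_diff)
    have b: "(of_nat (i-1)::'a) = of_nat i - 1" using i by (simp add: of_nat_diff)
    have h1: "?th (i - 2) - ?th (i + 1) = 2 * 3" unfolding thv a by (simp add: algebra_simps)
    have h2: "?th (i - 1) - ?th i = 2" unfolding thv b by (simp add: algebra_simps)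
    show "(?th (i - 2) - ?th (i + 1)) / (?th (i - 1) - ?th i) = 2 + 1"
      unfolding h1 h2 using two by simp
  qed
  let ?ka = "\<lambda>i. \<Prod>k<i. of_nat (d - k) * (s - 1)"
  let ?g1 = "\<lambda>i. smult (?ka i) (fam d s (-1) i)"
  let ?phi = "\<lambda>i. of_nat (i * (d - i + 1)) * (s + inverse s - 2)"
  have FS: "first_split d A ?th As ?th ?phi"
  proof -
    have ab: "s \<noteq> -1" using s1 by simp
    have kap: "\<forall>i\<le>d. ?ka i \<noteq> 0" by (rule kap_nz[OF nz]) (use s1 in simp)
    have k0: "?ka 0 = 1" by simp
    have step: "\<And>i. i < d \<Longrightarrow> (A - ?th i \<cdot>\<^sub>m 1\<^sub>m (d+1)) *\<^sub>v vc d (?g1 i) = vc d (?g1 (Suc i))"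
    proof -
      fix i assume i: "i < d"
      have "A - ?th i \<cdot>\<^sub>m 1\<^sub>m (d+1) = Mab d 1 1 (- (of_nat d - 2 * of_nat i))"
        unfolding hA Mab_shift thv by simp
      hence "(A - ?th i \<cdot>\<^sub>m 1\<^sub>m (d+1)) *\<^sub>v vc d (?g1 i) = vc d (smult (?ka i) (smult 0 (fam d s (-1) i)
          + smult 0 (fam d s (-1) (i-1)) + smult (of_nat (d - i) * (s - 1)) (fam d s (-1) (i+1))))"
        using Mab_sm[OF inst5[OF nz, of i s]] i by simp
      also have "\<dots> = vc d (?g1 (Suc i))" by (simp add: mult.commute)
      finally show "(A - ?th i \<cdot>\<^sub>m 1\<^sub>m (d+1)) *\<^sub>v vc d (?g1 i) = vc d (?g1 (Suc i))" .
    qed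
    have eigAs: "\<And>j. j \<le> d \<Longrightarrow> As *\<^sub>v vc d (?g1 j) = vc d (smult (?th j) (?g1 j) + smult (?phi j) (?g1 (j-1)) + smult 0 (?g1 (j+1)))"
    proof -
      fix j assume j: "j \<le> d"
      have key: "?ka j * (of_nat j * (s - 1) / s) = ?phi j * ?ka (j-1)"
      proof (cases j)
        case 0 thus ?thesis by simp
      next
        case (Suc j')
        have e1: "?ka j = ?ka j' * (of_nat (d - j') * (s - 1))" unfolding Suc by simp
        have "d - j + 1 = d - j'" using j Suc by simp
        hence e2: "j * (d - j + 1) = j * (d - j')" by simp
        show ?thesis unfolding e1 e2 using s0 Suc by (simp add: field_simps)
      qed
      have "As *\<^sub>v vc d (?g1 j) = vc d (smult (?ka j) (smult (of_nat d - 2*of_nat j) (fam d s (-1) j)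
         + smult (of_nat j * (s - 1) / s) (fam d s (-1) (j-1)) + smult 0 (fam d s (-1) (j+1))))"
        unfolding hAs by (rule Mab_sm[OF inst6[OF nz j s0]])
      also have "\<dots> = vc d (smult (?th j) (?g1 j) + smult (?phi j) (?g1 (j-1)) + smult 0 (?g1 (j+1)))"
        unfolding thv by (rule arg_cong[where f = "vc d"], rule scale_rel[OF key])
      finally show "As *\<^sub>v vc d (?g1 j) = vc d (smult (?th j) (?g1 j) + smult (?phi j) (?g1 (j-1)) + smult 0 (?g1 (j+1)))" .
    qed
    have p0: "?phi 0 = 0" by simp
    show ?thesis by (rule split_gen[OF nz Ac Asc ab kap k0 refl step eigAs p0 dist])
  qed
  let ?kb = "\<lambda>i. \<Prod>k<i. of_nat (d - k) * (s + 1)"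
  let ?g2 = "\<lambda>i. smult (?kb i) (fam d s 1 i)"
  let ?phi' = "\<lambda>i. of_nat (i * (d - i + 1)) * (s + inverse s + 2)"
  have SS: "second_split d A ?th As ?th ?phi'"
    unfolding second_split_def
  proof -
    have ab: "s \<noteq> 1" using s1 by simp
    have s1': "s + 1 \<noteq> 0"
    proof
      assume "s + 1 = 0"
      hence "s = -1" by (simp add: eq_neg_iff_add_eq_0)
      thus False using s1 by simp
    qed
    have kap: "\<forall>i\<le>d. ?kb i \<noteq> 0" by (rule kap_nz[OF nz s1'])
    have k0: "?kb 0 = 1" by simp
    have step: "\<And>i. i < d \<Longrightarrow> (A - ?th (d - i) \<cdot>\<^sub>m 1\<^sub>m (d+1)) *\<^sub>v vc d (?g2 i) = vc d (?g2 (Suc i))"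
    proof -
      fix i assume i: "i < d"
      have t: "?th (d - i) = 2 * of_nat i - of_nat d" using i by (simp add: of_nat_diff)
      have "A - ?th (d - i) \<cdot>\<^sub>m 1\<^sub>m (d+1) = Mab d 1 1 (- (2 * of_nat i - of_nat d))"
        unfolding hA Mab_shift t by simp
      hence "(A - ?th (d - i) \<cdot>\<^sub>m 1\<^sub>m (d+1)) *\<^sub>v vc d (?g2 i) = vc d (smult (?kb i) (smult 0 (fam d s 1 i)
          + smult 0 (fam d s 1 (i-1)) + smult (of_nat (d - i) * (s + 1)) (fam d s 1 (i+1))))"
        using Mab_sm[OF inst7[OF nz, of i s]] i by simp
      also have "\<dots> = vc d (?g2 (Suc i))" by (simp add: mult.commute)
      finally show "(A - ?th (d - i) \<cdot>\<^sub>m 1\<^sub>m (d+1)) *\<^sub>v vc d (?g2 i) = vc d (?g2 (Suc i))" .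
    qed
    have eigAs: "\<And>j. j \<le> d \<Longrightarrow> As *\<^sub>v vc d (?g2 j) = vc d (smult (?th j) (?g2 j) + smult (?phi' j) (?g2 (j-1)) + smult 0 (?g2 (j+1)))"
    proof -
      fix j assume j: "j \<le> d"
      have key: "?kb j * (of_nat j * (s + 1) / s) = ?phi' j * ?kb (j-1)"
      proof (cases j)
        case 0 thus ?thesis by simp
      next
        case (Suc j')
        have e1: "?kb j = ?kb j' * (of_nat (d - j') * (s + 1))" unfolding Suc by simp
        have "d - j + 1 = d - j'" using j Suc by simp
        hence e2: "j * (d - j + 1) = j * (d - j')" by simp
        show ?thesis unfolding e1 e2 using s0 Suc by (simp add: field_simps)
      qed
      have "As *\<^sub>v vc d (?g2 j) = vc d (smult (?kb j) (smult (of_nat d - 2*of_nat j) (fam d s 1 j)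
         + smult (of_nat j * (s + 1) / s) (fam d s 1 (j-1)) + smult 0 (fam d s 1 (j+1))))"
        unfolding hAs by (rule Mab_sm[OF inst8[OF nz j s0]])
      also have "\<dots> = vc d (smult (?th j) (?g2 j) + smult (?phi' j) (?g2 (j-1)) + smult 0 (?g2 (j+1)))"
        unfolding thv by (rule arg_cong[where f = "vc d"], rule scale_rel[OF key])
      finally show "As *\<^sub>v vc d (?g2 j) = vc d (smult (?th j) (?g2 j) + smult (?phi' j) (?g2 (j-1)) + smult 0 (?g2 (j+1)))" .
    qed
    have p0: "?phi' 0 = 0" by simp
    show "first_split d A (\<lambda>i. ?th (d - i)) As ?th ?phi'"
      by (rule split_gen[OF nz Ac Asc ab kap k0 refl step eigAs p0 dist])
  qed
  show ?thesis
    unfolding parameter_array_def using LP FP LS FS SS by blast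
qed


end
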